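(* In the setting described in the context, the following are equivalent: (a) Condition [A] holds; (b) Condition $[A']_r$ holds for some $r>0$; (c) Condition $[A']_r$ holds for every $r>0$.
   Context: $\mathbb W$ isonormal Gaussian process on $\mathfrak H=L^2(\mathbb R_+)$ on $(\Omega,\mathcal F,P)$; $D$, $\mathbb D^\infty$, $I_q$, $D_{t_i}\cdots D_{t_1}F$ densities of $D^iF$, $D_hF=\langle DF,h\rangle$. $t_j=j/n$, $I_j=[t_{j-1},t_j]$, $1_j=1_{I_j}$, $\mathbb J_n=\{1,\dots,n\}$. $\mathcal Q\subset\{2,3,\dots\}$ finite, $a_j(q)=a^n_j(q)$ random variables, $X_\infty$ a random variable, and fixed measurable random fields $a(t,q),\mathring a(t,s,q),\mathring{\mathring a}(t,s,q)$ ($q\in\mathcal Q$; $t,s\in[0,1]$) and, if $2\in\mathcal Q$, $\dot a(t,2),\ddot a(t,2)$; $G_\infty=\sum_qq!\int_0^1a(t,q)^2dt$. Common conditions: (C1) $a_j(q)\in\mathbb D^\infty$, $\sup_n\sup_j\sup_{t_1..t_i\in[0,1]}\|D_{t_i}\cdots D_{t_1}a_j(q)\|_p<\infty$ ($i\in\mathbb Z_+,p>1,q$). (C2) $G_\infty\in\mathbb D^\infty$, $\sup_{t_1..t_i}\|D_{t_i}\cdots D_{t_1}G_\infty\|_p<\infty$ ($i\in\mathbb N,p>1$), and $n^{-1}\sum_j\sum_qq!a_j(q)^2-G_\infty=o_p(n^{-1/2})$. (C3) $X_\infty\in\mathbb D^\infty$, $\sup_{t_1..t_i}\|D_{t_i}\cdots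 D_{t_1}X_\infty\|_p<\infty$, and a measurable process $\ddot X_\infty(t)$ with $E[\int_0^11_{\{|\sum_j1_{I_j}(t)n^2D_{1_j}D_{1_j}X_\infty-\ddot X_\infty(t)|>\epsilon\}}dt]\to0$ for all $\epsilon>0$. Condition [A]: (C1),(C2),(C3) and, for all $\epsilon>0$ and $q\in\mathcal Q$, as $n\to\infty$: $E[\int_0^11_{\{|\sum_j1_{I_j}(s)a_j(q)-a(s,q)|>\epsilon\}}ds]\to0$; $E[\int_{[0,1]^2}1_{\{|\sum_{j,k}1_{I_k\times I_j}(t,s)nD_{1_k}a_j(q)-\mathring a(t,s,q)|>\epsilon\}}dsdt]\to0$; if $2\in\mathcal Q$, $E[\int_0^11_{\{|\sum_k1_{I_k}(t)nD_{1_k}a_k(2)-\dot a(t,2)|>\epsilon\}}dt]\to0$; $E[\int_{[0,1]^2}1_{\{|\sum_{j,k}1_{I_k\times I_j}(t,s)n^2D_{1_k}D_{1_k}a_j(q)-\mathring{\mathring a}(t,s,q)|>\epsilon\}}dsdt]\to0$; if $2\in\mathcal Q$, $E[\int_{[0,1]^2}1_{\{|\sum_j1_{I_j}(t)n^2D_{1_j}D_{1_j}a_j(2)-\ddot a(t,2)|>\epsilon\}}dsdt]\to0$. Condition $[A']_r$ ($r>0$): (C1),(C2),(C3) and, for every $q\in\mathcal Q$, as $n\to\infty$, in probability: $\sum_j\int_0^11_{I_j}(s)|a_j(q)-a(s,q)|^rds\to0$; $\sum_{j,k}\int_0^1\int_0^11_{I_k\times I_j}(t,s)|nD_{1_k}a_j(q)-\mathring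 a(t,s,q)|^rdsdt\to0$; if $2\in\mathcal Q$, $\sum_k\int_0^11_{I_k}(t)|nD_{1_k}a_k(2)-\dot a(t,2)|^rdt\to0$; $\sum_{j,k}\int_{[0,1]^2}1_{I_k\times I_j}(t,s)|n^2D_{1_k}D_{1_k}a_j(q)-\mathring{\mathring a}(t,s,q)|^rdsdt\to0$; if $2\in\mathcal Q$, $\sum_j\int_0^11_{I_j}(t)|n^2D_{1_j}D_{1_j}a_j(2)-\ddot a(t,2)|^rdt\to0$. *)

theory Defs
  imports "HOL-Probability.Probability"
begin

section \<open>Isonormal Gaussian process on L2(R+)\<close>

text \<open>Elements of the Hilbert space L2(R+) are represented by real functions
  that are Borel measurable and square integrable on [0,infinity).\<close>

definition L2plus :: "(real \<Rightarrow> real) \<Rightarrow> bool" where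
  "L2plus h \<longleftrightarrow> h \<in> borel_measurable lborel \<and>
     integrable lborel (\<lambda>t. indicator {0..} t * (h t)\<^sup>2)"

definition sqnorm_L2plus :: "(real \<Rightarrow> real) \<Rightarrow> real" where
  "sqnorm_L2plus h = (\<integral>t. indicator {0..} t * (h t)\<^sup>2 \<partial>lborel)"

definition centered_gaussian :: "'a measure \<Rightarrow> ('a \<Rightarrow> real) \<Rightarrow> real \<Rightarrow> bool" where
  "centered_gaussian M X v \<longleftrightarrow>
     (if v = 0 then (AE \<omega> in M. X \<omega> = 0)
      else distributed M lborel X (\<lambda>x. ennreal (normal_density 0 (sqrt v) x)))"

text \<open>Isonormal Gaussian process: linear (a.s.) and each W(h) centered Gaussian
  with variance the squared L2 norm of h (this implies joint Gaussianity with
  covariance the inner product).\<close>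
definition isonormal :: "'a measure \<Rightarrow> ((real \<Rightarrow> real) \<Rightarrow> 'a \<Rightarrow> real) \<Rightarrow> bool" where
  "isonormal M W \<longleftrightarrow>
     (\<forall>h. L2plus h \<longrightarrow> W h \<in> borel_measurable M \<and> centered_gaussian M (W h) (sqnorm_L2plus h)) \<and>
     (\<forall>h g (\<alpha>::real) (\<beta>::real). L2plus h \<longrightarrow> L2plus g \<longrightarrow>
        (AE \<omega> in M. W (\<lambda>t. \<alpha> * h t + \<beta> * g t) \<omega> = \<alpha> * W h \<omega> + \<beta> * W g \<omega>))"

section \<open>Polynomial functionals and their Malliavin derivatives\<close>

text \<open>A polynomial functional is a finite linear combination of products
  W(h_1)...W(h_m); it is represented by a list of (coefficient, list of h's).\<close>
type_synonym poly_rep = "(real \<times> (real \<Rightarrow> real) list) list"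

definition valid_rep :: "poly_rep \<Rightarrow> bool" where
  "valid_rep R \<longleftrightarrow> (\<forall>(c, hs) \<in> set R. \<forall>h \<in> set hs. L2plus h)"

definition poly_val :: "((real \<Rightarrow> real) \<Rightarrow> 'a \<Rightarrow> real) \<Rightarrow> poly_rep \<Rightarrow> 'a \<Rightarrow> real" where
  "poly_val W R \<omega> = sum_list (map (\<lambda>(c, hs). c * prod_list (map (\<lambda>h. W h \<omega>) hs)) R)"

text \<open>Density of the k-th Malliavin derivative of a polynomial functional at
  (t_1,...,t_k) = (ts 0, ..., ts (k-1)):
  D^k (W(h_0)...W(h_{m-1})) = sum over injective s of prod_{j not in range s} W(h_j) *
  h_{s 0}(t_1) ... h_{s (k-1)}(t_k).\<close>
definition poly_deriv :: "((real \<Rightarrow> real) \<Rightarrow> 'a \<Rightarrow> real) \<Rightarrow> poly_rep \<Rightarrow> nat \<Rightarrow> (nat \<Rightarrow> real) \<Rightarrow> 'a \<Rightarrow> real" where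
  "poly_deriv W R k ts \<omega> = sum_list (map (\<lambda>(c, hs). c *
      (\<Sum>\<sigma>\<in>{\<sigma> \<in> {..<k} \<rightarrow>\<^sub>E {..<length hs}. inj_on \<sigma> {..<k}}.
          (\<Prod>j\<in>{..<length hs} - \<sigma> ` {..<k}. W (hs ! j) \<omega>) * (\<Prod>l<k. (hs ! \<sigma> l) (ts l)))) R)"

definition Pt :: "nat \<Rightarrow> (nat \<Rightarrow> real) measure" where
  "Pt k = PiM {..<k} (\<lambda>_. restrict_space lborel {0..})"

definition ennpow :: "ennreal \<Rightarrow> real \<Rightarrow> ennreal" where
  "ennpow x e = (if x = \<top> then \<top> else ennreal (enn2real x powr e))"

definition pmoment :: "'a measure \<Rightarrow> real \<Rightarrow> ('a \<Rightarrow> real) \<Rightarrow> ennreal" where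
  "pmoment M p X = (\<integral>\<^sup>+\<omega>. ennreal (\<bar>X \<omega>\<bar> powr p) \<partial>M)"

text \<open>p-th power of the L^p(Omega; L2(R+^k)) distance.\<close>
definition Lp_L2_dist :: "'a measure \<Rightarrow> real \<Rightarrow> nat \<Rightarrow> ((nat \<Rightarrow> real) \<Rightarrow> 'a \<Rightarrow> real)
    \<Rightarrow> ((nat \<Rightarrow> real) \<Rightarrow> 'a \<Rightarrow> real) \<Rightarrow> ennreal" where
  "Lp_L2_dist M p k G1 G2 =
     (\<integral>\<^sup>+\<omega>. ennpow (\<integral>\<^sup>+ts. ennreal ((G1 ts \<omega> - G2 ts \<omega>)\<^sup>2) \<partial>Pt k) (p / 2) \<partial>M)"

text \<open>D^infinity = intersection over k, p of D^{k,p}, where D^{k,p} is the closure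
  of the polynomial functionals w.r.t. the norm
  (E|F|^p + sum_{j\<le>k} E||D^j F||^p)^{1/p}.\<close>
definition in_Dinf :: "'a measure \<Rightarrow> ((real \<Rightarrow> real) \<Rightarrow> 'a \<Rightarrow> real) \<Rightarrow> ('a \<Rightarrow> real) \<Rightarrow> bool" where
  "in_Dinf M W F \<longleftrightarrow> F \<in> borel_measurable M \<and>
     (\<forall>k::nat. \<forall>p::real. p \<ge> 1 \<longrightarrow>
        (\<exists>R::nat \<Rightarrow> poly_rep. (\<forall>m. valid_rep (R m)) \<and>
           ((\<lambda>m. pmoment M p (\<lambda>\<omega>. poly_val W (R m) \<omega> - F \<omega>)) \<longlonglongrightarrow> 0) \<and>
           (\<forall>j\<in>{1..k}. \<exists>G. (\<lambda>(ts, \<omega>). G ts \<omega>) \<in> borel_measurable (Pt j \<Otimes>\<^sub>M M) \<and>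
               ((\<lambda>m. Lp_L2_dist M p j (poly_deriv W (R m) j) G) \<longlonglongrightarrow> 0))))"

text \<open>G is a (jointly measurable) version of the density (t_1..t_i) \<mapsto> D_{t_i}...D_{t_1}F,
  i.e. the limit of D^i of approximating polynomial functionals (D^i is closable,
  so G is unique a.e.).\<close>
definition malliavin_density :: "'a measure \<Rightarrow> ((real \<Rightarrow> real) \<Rightarrow> 'a \<Rightarrow> real) \<Rightarrow> ('a \<Rightarrow> real)
    \<Rightarrow> nat \<Rightarrow> ((nat \<Rightarrow> real) \<Rightarrow> 'a \<Rightarrow> real) \<Rightarrow> bool" where
  "malliavin_density M W F i G \<longleftrightarrow>
     (\<lambda>(ts, \<omega>). G ts \<omega>) \<in> borel_measurable (Pt i \<Otimes>\<^sub>M M) \<and>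
     (\<exists>p::real. p \<ge> 1 \<and> (\<exists>R::nat \<Rightarrow> poly_rep. (\<forall>m. valid_rep (R m)) \<and>
        ((\<lambda>m. pmoment M p (\<lambda>\<omega>. poly_val W (R m) \<omega> - F \<omega>)) \<longlonglongrightarrow> 0) \<and>
        ((\<lambda>m. Lp_L2_dist M p i (poly_deriv W (R m) i) G) \<longlonglongrightarrow> 0)))"

section \<open>Discretisation\<close>

definition Iv :: "nat \<Rightarrow> nat \<Rightarrow> real set" where
  "Iv n j = {(real j - 1) / real n .. real j / real n}"

definition cube :: "nat \<Rightarrow> (nat \<Rightarrow> real) set" where
  "cube i = PiE {..<i} (\<lambda>_. {0..1})"

text \<open>D_{1_k} F = <DF, 1_{I_k}>, computed from a density G of DF.\<close>
definition D1 :: "nat \<Rightarrow> nat \<Rightarrow> ((nat \<Rightarrow> real) \<Rightarrow> 'a \<Rightarrow> real) \<Rightarrow> 'a \<Rightarrow> real" where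
  "D1 n k G \<omega> = (\<integral>ts. indicator (Iv n k) (ts 0) * G ts \<omega> \<partial>Pt 1)"

text \<open>D_{1_k} D_{1_k} F = <D^2 F, 1_{I_k} \<otimes> 1_{I_k}>, from a density G of D^2 F.\<close>
definition D11 :: "nat \<Rightarrow> nat \<Rightarrow> ((nat \<Rightarrow> real) \<Rightarrow> 'a \<Rightarrow> real) \<Rightarrow> 'a \<Rightarrow> real" where
  "D11 n k G \<omega> = (\<integral>ts. indicator (Iv n k) (ts 0) * indicator (Iv n k) (ts 1) * G ts \<omega> \<partial>Pt 2)"

definition conv_prob :: "'a measure \<Rightarrow> (nat \<Rightarrow> 'a \<Rightarrow> real) \<Rightarrow> bool" where
  "conv_prob M Y \<longleftrightarrow> (\<forall>\<epsilon>>0. (\<lambda>n. measure M {\<omega>\<in>space M. \<epsilon> < \<bar>Y n \<omega>\<bar>}) \<longlonglongrightarrow> 0)"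

definition conv_prob_enn :: "'a measure \<Rightarrow> (nat \<Rightarrow> 'a \<Rightarrow> ennreal) \<Rightarrow> bool" where
  "conv_prob_enn M Y \<longleftrightarrow> (\<forall>\<epsilon>::real>0. (\<lambda>n. measure M {\<omega>\<in>space M. ennreal \<epsilon> < Y n \<omega>}) \<longlonglongrightarrow> 0)"

text \<open>a n j q = a^n_j(q); Da n j q i ts = D_{t_i}...D_{t_1} a^n_j(q) with t_l = ts (l-1).\<close>
definition cond_C1 :: "'a measure \<Rightarrow> ((real \<Rightarrow> real) \<Rightarrow> 'a \<Rightarrow> real) \<Rightarrow> nat set
    \<Rightarrow> (nat \<Rightarrow> nat \<Rightarrow> nat \<Rightarrow> 'a \<Rightarrow> real)
    \<Rightarrow> (nat \<Rightarrow> nat \<Rightarrow> nat \<Rightarrow> nat \<Rightarrow> (nat \<Rightarrow> real) \<Rightarrow> 'a \<Rightarrow> real) \<Rightarrow> bool" where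
  "cond_C1 M W Q a Da \<longleftrightarrow>
     (\<forall>n j q. j \<in> {1..n} \<longrightarrow> q \<in> Q \<longrightarrow> in_Dinf M W (a n j q)) \<and>
     (\<forall>i::nat. \<forall>p::real. \<forall>q\<in>Q. p > 1 \<longrightarrow>
        (\<exists>C::real. \<forall>n j. j \<in> {1..n} \<longrightarrow> (\<forall>ts\<in>cube i. pmoment M p (Da n j q i ts) \<le> ennreal C)))"

definition cond_C2 :: "'a measure \<Rightarrow> ((real \<Rightarrow> real) \<Rightarrow> 'a \<Rightarrow> real) \<Rightarrow> nat set
    \<Rightarrow> (nat \<Rightarrow> nat \<Rightarrow> nat \<Rightarrow> 'a \<Rightarrow> real) \<Rightarrow> ('a \<Rightarrow> real)
    \<Rightarrow> (nat \<Rightarrow> (nat \<Rightarrow> real) \<Rightarrow> 'a \<Rightarrow> real) \<Rightarrow> bool" where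
  "cond_C2 M W Q a Ginf DG \<longleftrightarrow>
     in_Dinf M W Ginf \<and>
     (\<forall>i::nat. \<forall>p::real. i \<ge> 1 \<longrightarrow> p > 1 \<longrightarrow>
        (\<exists>C::real. \<forall>ts\<in>cube i. pmoment M p (DG i ts) \<le> ennreal C)) \<and>
     conv_prob M (\<lambda>n \<omega>. sqrt (real n) *
        ((1 / real n) * (\<Sum>j=1..n. \<Sum>q\<in>Q. fact q * (a n j q \<omega>)\<^sup>2) - Ginf \<omega>))"

definition cond_C3 :: "'a measure \<Rightarrow> ((real \<Rightarrow> real) \<Rightarrow> 'a \<Rightarrow> real) \<Rightarrow> ('a \<Rightarrow> real)
    \<Rightarrow> (nat \<Rightarrow> (nat \<Rightarrow> real) \<Rightarrow> 'a \<Rightarrow> real) \<Rightarrow> bool" where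
  "cond_C3 M W X DX \<longleftrightarrow>
     in_Dinf M W X \<and>
     (\<forall>i::nat. \<forall>p::real. p > 1 \<longrightarrow>
        (\<exists>C::real. \<forall>ts\<in>cube i. pmoment M p (DX i ts) \<le> ennreal C)) \<and>
     (\<exists>Xdd :: real \<Rightarrow> 'a \<Rightarrow> real.
        (\<lambda>(t, \<omega>). Xdd t \<omega>) \<in> borel_measurable (lborel \<Otimes>\<^sub>M M) \<and>
        (\<forall>\<epsilon>::real>0. (\<lambda>n. \<integral>\<^sup>+\<omega>. (\<integral>\<^sup>+t\<in>{0..1}. of_bool (\<epsilon> <
            \<bar>(\<Sum>j=1..n. indicator (Iv n j) t * ((real n)\<^sup>2 * D11 n j (DX 2) \<omega>)) - Xdd t \<omega>\<bar>) \<partial>lborel) \<partial>M)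
          \<longlonglongrightarrow> 0))"

text \<open>Condition [A].  af = a(t,q), ar = ring-a(t,s,q), arr = double-ring-a(t,s,q),
  ad = dot-a(t,2), add = double-dot-a(t,2).\<close>
definition cond_A :: "'a measure \<Rightarrow> ((real \<Rightarrow> real) \<Rightarrow> 'a \<Rightarrow> real) \<Rightarrow> nat set
    \<Rightarrow> (nat \<Rightarrow> nat \<Rightarrow> nat \<Rightarrow> 'a \<Rightarrow> real)
    \<Rightarrow> (nat \<Rightarrow> nat \<Rightarrow> nat \<Rightarrow> nat \<Rightarrow> (nat \<Rightarrow> real) \<Rightarrow> 'a \<Rightarrow> real)
    \<Rightarrow> ('a \<Rightarrow> real) \<Rightarrow> (nat \<Rightarrow> (nat \<Rightarrow> real) \<Rightarrow> 'a \<Rightarrow> real)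
    \<Rightarrow> ('a \<Rightarrow> real) \<Rightarrow> (nat \<Rightarrow> (nat \<Rightarrow> real) \<Rightarrow> 'a \<Rightarrow> real)
    \<Rightarrow> (real \<Rightarrow> nat \<Rightarrow> 'a \<Rightarrow> real) \<Rightarrow> (real \<Rightarrow> real \<Rightarrow> nat \<Rightarrow> 'a \<Rightarrow> real)
    \<Rightarrow> (real \<Rightarrow> real \<Rightarrow> nat \<Rightarrow> 'a \<Rightarrow> real) \<Rightarrow> (real \<Rightarrow> 'a \<Rightarrow> real) \<Rightarrow> (real \<Rightarrow> 'a \<Rightarrow> real)
    \<Rightarrow> bool" where
  "cond_A M W Q a Da Ginf DG X DX af ar arr ad add \<longleftrightarrow>
     cond_C1 M W Q a Da \<and> cond_C2 M W Q a Ginf DG \<and> cond_C3 M W X DX \<and>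
     (\<forall>\<epsilon>::real>0. \<forall>q\<in>Q.
        ((\<lambda>n. \<integral>\<^sup>+\<omega>. (\<integral>\<^sup>+s\<in>{0..1}. of_bool (\<epsilon> <
            \<bar>(\<Sum>j=1..n. indicator (Iv n j) s * a n j q \<omega>) - af s q \<omega>\<bar>) \<partial>lborel) \<partial>M) \<longlonglongrightarrow> 0) \<and>
        ((\<lambda>n. \<integral>\<^sup>+\<omega>. (\<integral>\<^sup>+t\<in>{0..1}. (\<integral>\<^sup>+s\<in>{0..1}. of_bool (\<epsilon> <
            \<bar>(\<Sum>j=1..n. \<Sum>k=1..n. indicator (Iv n k) t * indicator (Iv n j) s *
                (real n * D1 n k (Da n j q 1) \<omega>)) - ar t s q \<omega>\<bar>) \<partial>lborel) \<partial>lborel) \<partial>M) \<longlonglongrightarrow> 0) \<and>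
        (2 \<in> Q \<longrightarrow> ((\<lambda>n. \<integral>\<^sup>+\<omega>. (\<integral>\<^sup>+t\<in>{0..1}. of_bool (\<epsilon> <
            \<bar>(\<Sum>k=1..n. indicator (Iv n k) t * (real n * D1 n k (Da n k 2 1) \<omega>)) - ad t \<omega>\<bar>) \<partial>lborel) \<partial>M)
            \<longlonglongrightarrow> 0)) \<and>
        ((\<lambda>n. \<integral>\<^sup>+\<omega>. (\<integral>\<^sup>+t\<in>{0..1}. (\<integral>\<^sup>+s\<in>{0..1}. of_bool (\<epsilon> <
            \<bar>(\<Sum>j=1..n. \<Sum>k=1..n. indicator (Iv n k) t * indicator (Iv n j) s *
                ((real n)\<^sup>2 * D11 n k (Da n j q 2) \<omega>)) - arr t s q \<omega>\<bar>) \<partial>lborel) \<partial>lborel) \<partial>M) \<longlonglongrightarrow> 0) \<and>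
        (2 \<in> Q \<longrightarrow> ((\<lambda>n. \<integral>\<^sup>+\<omega>. (\<integral>\<^sup>+t\<in>{0..1}. (\<integral>\<^sup>+(s::real)\<in>{0..1}. of_bool (\<epsilon> <
            \<bar>(\<Sum>j=1..n. indicator (Iv n j) t * ((real n)\<^sup>2 * D11 n j (Da n j 2 2) \<omega>)) - add t \<omega>\<bar>)
               \<partial>lborel) \<partial>lborel) \<partial>M) \<longlonglongrightarrow> 0)))"

definition cond_A' :: "real \<Rightarrow> 'a measure \<Rightarrow> ((real \<Rightarrow> real) \<Rightarrow> 'a \<Rightarrow> real) \<Rightarrow> nat set
    \<Rightarrow> (nat \<Rightarrow> nat \<Rightarrow> nat \<Rightarrow> 'a \<Rightarrow> real)
    \<Rightarrow> (nat \<Rightarrow> nat \<Rightarrow> nat \<Rightarrow> nat \<Rightarrow> (nat \<Rightarrow> real) \<Rightarrow> 'a \<Rightarrow> real)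
    \<Rightarrow> ('a \<Rightarrow> real) \<Rightarrow> (nat \<Rightarrow> (nat \<Rightarrow> real) \<Rightarrow> 'a \<Rightarrow> real)
    \<Rightarrow> ('a \<Rightarrow> real) \<Rightarrow> (nat \<Rightarrow> (nat \<Rightarrow> real) \<Rightarrow> 'a \<Rightarrow> real)
    \<Rightarrow> (real \<Rightarrow> nat \<Rightarrow> 'a \<Rightarrow> real) \<Rightarrow> (real \<Rightarrow> real \<Rightarrow> nat \<Rightarrow> 'a \<Rightarrow> real)
    \<Rightarrow> (real \<Rightarrow> real \<Rightarrow> nat \<Rightarrow> 'a \<Rightarrow> real) \<Rightarrow> (real \<Rightarrow> 'a \<Rightarrow> real) \<Rightarrow> (real \<Rightarrow> 'a \<Rightarrow> real)
    \<Rightarrow> bool" where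
  "cond_A' r M W Q a Da Ginf DG X DX af ar arr ad add \<longleftrightarrow>
     cond_C1 M W Q a Da \<and> cond_C2 M W Q a Ginf DG \<and> cond_C3 M W X DX \<and>
     (\<forall>q\<in>Q.
        conv_prob_enn M (\<lambda>n \<omega>. \<Sum>j=1..n. \<integral>\<^sup>+s\<in>{0..1}.
            ennreal (indicator (Iv n j) s * \<bar>a n j q \<omega> - af s q \<omega>\<bar> powr r) \<partial>lborel) \<and>
        conv_prob_enn M (\<lambda>n \<omega>. \<Sum>j=1..n. \<Sum>k=1..n. \<integral>\<^sup>+t\<in>{0..1}. \<integral>\<^sup>+s\<in>{0..1}.
            ennreal (indicator (Iv n k) t * indicator (Iv n j) s *
              \<bar>real n * D1 n k (Da n j q 1) \<omega> - ar t s q \<omega>\<bar> powr r) \<partial>lborel \<partial>lborel) \<and>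
        (2 \<in> Q \<longrightarrow> conv_prob_enn M (\<lambda>n \<omega>. \<Sum>k=1..n. \<integral>\<^sup>+t\<in>{0..1}.
            ennreal (indicator (Iv n k) t *
              \<bar>real n * D1 n k (Da n k 2 1) \<omega> - ad t \<omega>\<bar> powr r) \<partial>lborel)) \<and>
        conv_prob_enn M (\<lambda>n \<omega>. \<Sum>j=1..n. \<Sum>k=1..n. \<integral>\<^sup>+t\<in>{0..1}. \<integral>\<^sup>+s\<in>{0..1}.
            ennreal (indicator (Iv n k) t * indicator (Iv n j) s *
              \<bar>(real n)\<^sup>2 * D11 n k (Da n j q 2) \<omega> - arr t s q \<omega>\<bar> powr r) \<partial>lborel \<partial>lborel) \<and>
        (2 \<in> Q \<longrightarrow> conv_prob_enn M (\<lambda>n \<omega>. \<Sum>j=1..n. \<integral>\<^sup>+t\<in>{0..1}.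
            ennreal (indicator (Iv n j) t *
              \<bar>(real n)\<^sup>2 * D11 n j (Da n j 2 2) \<omega> - add t \<omega>\<bar> powr r) \<partial>lborel)))"

end

theory Submission
  imports Defs
begin

lemma ennreal_tendsto_0I:
  fixes x :: "nat \<Rightarrow> ennreal"
  assumes "\<And>\<delta>. \<delta> > 0 \<Longrightarrow> eventually (\<lambda>n. x n \<le> ennreal \<delta>) sequentially"
  shows "x \<longlonglongrightarrow> 0"
proof (rule order_tendstoI)
  fix a :: ennreal assume "a < 0" then show "eventually (\<lambda>n. a < x n) sequentially" by simp
next
  fix a :: ennreal assume a: "0 < a"
  then obtain b where b: "0 < b" "b < a" using dense by blast
  define d where "d = enn2real (min b 1)"
  have "min b 1 < top" by (metis min.cobounded2 ennreal_one_less_top order.strict_trans1)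
  then have e: "ennreal d = min b 1" unfolding d_def by (simp add: ennreal_enn2real)
  have "d > 0" using b e by (metis ennreal_eq_0_iff less_le min_less_iff_conj not_le zero_less_one)
  then have "eventually (\<lambda>n. x n \<le> ennreal d) sequentially" by (rule assms)
  then show "eventually (\<lambda>n. x n < a) sequentially"
    by eventually_elim (use e b in \<open>auto simp: min_def split: if_splits\<close>)
qed

lemma real_tendsto_0I:
  fixes x :: "nat \<Rightarrow> real"
  assumes "\<And>n. 0 \<le> x n" "\<And>e. e > 0 \<Longrightarrow> eventually (\<lambda>n. x n \<le> e) sequentially"
  shows "x \<longlonglongrightarrow> 0"
proof (rule order_tendstoI)
  fix a :: real assume "a < 0" then show "eventually (\<lambda>n. a < x n) sequentially"
    using assms(1) by (intro always_eventually allI) (metis less_le_trans)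
next
  fix a :: real assume a: "0 < a"
  then have "eventually (\<lambda>n. x n \<le> a/2) sequentially" by (intro assms(2)) simp
  then show "eventually (\<lambda>n. x n < a) sequentially"
    by eventually_elim (use a in auto)
qed

lemma pow_sum_bound:
  fixes x y :: real
  shows "\<bar>x + y\<bar> ^ N \<le> 2 ^ N * (\<bar>x\<bar> ^ N + \<bar>y\<bar> ^ N)"
proof -
  have "\<bar>x + y\<bar> \<le> 2 * max \<bar>x\<bar> \<bar>y\<bar>" by auto
  then have "\<bar>x + y\<bar> ^ N \<le> (2 * max \<bar>x\<bar> \<bar>y\<bar>) ^ N" by (intro power_mono) auto
  also have "\<dots> = 2 ^ N * max \<bar>x\<bar> \<bar>y\<bar> ^ N" by (simp add: power_mult_distrib)
  also have "max \<bar>x\<bar> \<bar>y\<bar> ^ N \<le> \<bar>x\<bar> ^ N + \<bar>y\<bar> ^ N" by (auto simp: max_def)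
  finally show ?thesis by simp
qed

lemma split_pow_bound:
  fixes v d K r :: real and N :: nat
  assumes "0 < d" "d \<le> K" "0 < r" "r < N"
  shows "\<bar>v\<bar> powr r \<le> d powr r + K powr r * of_bool (d < \<bar>v\<bar>) + \<bar>v\<bar> ^ N / K powr (N - r)"
proof (cases "\<bar>v\<bar> \<le> d")
  case True
  then have "\<bar>v\<bar> powr r \<le> d powr r" by (intro powr_mono2) (use assms in auto)
  moreover have "0 \<le> K powr r * of_bool (d < \<bar>v\<bar>)" "0 \<le> \<bar>v\<bar> ^ N / K powr (N - r)" by auto
  ultimately show ?thesis by linarith
next
  case False
  show ?thesis
  proof (cases "\<bar>v\<bar> \<le> K")
    case True
    then have "\<bar>v\<bar> powr r \<le> K powr r" by (intro powr_mono2) (use assms in auto)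
    moreover have "0 \<le> d powr r" "0 \<le> \<bar>v\<bar> ^ N / K powr (N - r)" by auto
    moreover have "K powr r * of_bool (d < \<bar>v\<bar>) = K powr r" using False by simp
    ultimately show ?thesis by linarith
  next
    case K: False
    have vpos: "\<bar>v\<bar> > 0" using K assms by auto
    have "\<bar>v\<bar> ^ N = \<bar>v\<bar> powr N" using vpos by (simp add: powr_realpow)
    also have "\<dots> = \<bar>v\<bar> powr r * \<bar>v\<bar> powr (N - r)" by (simp add: powr_add[symmetric])
    finally have eq: "\<bar>v\<bar> ^ N / K powr (N - r) = \<bar>v\<bar> powr r * (\<bar>v\<bar> powr (N - r) / K powr (N - r))"
      by simp
    have "K powr (N - r) \<le> \<bar>v\<bar> powr (N - r)" by (intro powr_mono2) (use assms K in auto)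
    then have "1 \<le> \<bar>v\<bar> powr (N - r) / K powr (N - r)" using assms by auto
    then have "\<bar>v\<bar> powr r \<le> \<bar>v\<bar> ^ N / K powr (N - r)" unfolding eq
      by (metis mult.right_neutral mult_left_mono powr_ge_zero)
    moreover have "0 \<le> d powr r" "0 \<le> K powr r * of_bool (d < \<bar>v\<bar>)" by auto
    ultimately show ?thesis by linarith
  qed
qed

locale grid =
  fixes M :: "'a measure" and nu :: "'t measure" and G :: "nat \<Rightarrow> 'g set"
    and chi :: "nat \<Rightarrow> 'g \<Rightarrow> 't \<Rightarrow> real" and c :: "nat \<Rightarrow> 'g \<Rightarrow> 'a \<Rightarrow> real"
    and f :: "'t \<Rightarrow> 'a \<Rightarrow> real"
  assumes M: "prob_space M" and nu: "prob_space nu"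
    and finG: "finite (G n)"
    and chi_meas: "chi n g \<in> borel_measurable nu"
    and chi01: "chi n g x = 0 \<or> chi n g x = 1"
    and part: "n \<ge> 1 \<Longrightarrow> AE x in nu. (\<Sum>g\<in>G n. chi n g x) = 1"
    and c_meas: "g \<in> G n \<Longrightarrow> c n g \<in> borel_measurable M"
    and f_meas: "(\<lambda>p. f (snd p) (fst p)) \<in> borel_measurable (M \<Otimes>\<^sub>M nu)"
begin

interpretation Mp: prob_space M by (rule M)
interpretation Np: prob_space nu by (rule nu)

definition "Z n x \<omega> = (\<Sum>g\<in>G n. chi n g x * c n g \<omega>)"
definition "V n x \<omega> = Z n x \<omega> - f x \<omega>"

lemma chi_nonneg: "0 \<le> chi n g x" using chi01[of n g x] by auto
lemma chi_le1: "chi n g x \<le> 1" using chi01[of n g x] by auto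

lemma Z_meas: "(\<lambda>p. Z n (snd p) (fst p)) \<in> borel_measurable (M \<Otimes>\<^sub>M nu)"
  unfolding Z_def
  by (intro borel_measurable_sum borel_measurable_times measurable_compose[OF measurable_snd chi_meas]
        measurable_compose[OF measurable_fst c_meas]) 

lemma V_meas: "(\<lambda>p. V n (snd p) (fst p)) \<in> borel_measurable (M \<Otimes>\<^sub>M nu)"
  unfolding V_def by (intro borel_measurable_diff Z_meas f_meas)

lemma sec_meas:
  assumes "(\<lambda>p. F (snd p) (fst p)) \<in> borel_measurable (M \<Otimes>\<^sub>M nu)" "\<omega> \<in> space M"
  shows "(\<lambda>x. F x \<omega>) \<in> borel_measurable nu"
  using measurable_Pair2[OF assms] by simp

lemma sec_meas_enn:
  assumes "(\<lambda>p. F (snd p) (fst p)) \<in> borel_measurable (M \<Otimes>\<^sub>M nu)" "\<omega> \<in> space M"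
  shows "(\<lambda>x. F x \<omega> :: ennreal) \<in> borel_measurable nu"
  using measurable_Pair2[OF assms] by simp

lemma int_meas:
  assumes "(\<lambda>p. F (snd p) (fst p) :: ennreal) \<in> borel_measurable (M \<Otimes>\<^sub>M nu)"
  shows "(\<lambda>\<omega>. \<integral>\<^sup>+x. F x \<omega> \<partial>nu) \<in> borel_measurable M"
  using Np.borel_measurable_nn_integral_fst[OF assms] by simp

lemma exactly_one:
  assumes "n \<ge> 1"
  shows "AE x in nu. \<exists>g\<in>G n. chi n g x = 1 \<and> (\<forall>g'\<in>G n. g' \<noteq> g \<longrightarrow> chi n g' x = 0)"
  using part[OF assms]
proof eventually_elim
  case (elim x)
  define S where "S = {g\<in>G n. chi n g x = 1}"
  have "(\<Sum>g\<in>G n. chi n g x) = (\<Sum>g\<in>G n. if g \<in> S then 1 else 0)"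
    using chi01 unfolding S_def by (intro sum.cong) force+
  also have "\<dots> = real (card S)" using finG[of n] unfolding S_def
    by (simp add: sum.If_cases[OF finG] Int_def)
  finally have "card S = 1" using elim by simp
  then obtain g where "S = {g}" by (auto simp: card_Suc_eq)
  then show ?case unfolding S_def using chi01 by (intro bexI[of _ g]) blast+
qed

lemma collapse:
  assumes "g \<in> G n" "chi n g x = 1" "\<forall>g'\<in>G n. g' \<noteq> g \<longrightarrow> chi n g' x = 0"
  shows "(\<Sum>g\<in>G n. chi n g x * h g) = h g"
proof -
  have "(\<Sum>g\<in>G n. chi n g x * h g) = chi n g x * h g + (\<Sum>g'\<in>G n - {g}. chi n g' x * h g')"
    using assms(1) finG by (simp add: sum.remove)
  also have "(\<Sum>g'\<in>G n - {g}. chi n g' x * h g') = 0" using assms(3) by (intro sum.neutral) auto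
  finally show ?thesis using assms(2) by simp
qed

definition "U r n \<omega> = (\<integral>\<^sup>+x. ennreal (\<bar>V n x \<omega>\<bar> powr r) \<partial>nu)"
definition "WA' r n \<omega> = (\<Sum>g\<in>G n. \<integral>\<^sup>+x. ennreal (chi n g x * \<bar>c n g \<omega> - f x \<omega>\<bar> powr r) \<partial>nu)"
definition "WA \<epsilon> n = (\<integral>\<^sup>+\<omega>. (\<integral>\<^sup>+x. of_bool (\<epsilon> < \<bar>V n x \<omega>\<bar>) \<partial>nu) \<partial>M)"

lemma U_meas: "U r n \<in> borel_measurable M"
proof -
  have "(\<lambda>v::real. ennreal (\<bar>v\<bar> powr r)) \<in> borel_measurable borel" by measurable
  then show ?thesis unfolding U_def by (intro int_meas measurable_compose[OF V_meas])
qed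

lemma WA'_eq:
  assumes n: "n \<ge> 1" and w: "\<omega> \<in> space M"
  shows "WA' r n \<omega> = U r n \<omega>"
proof -
  have fm[measurable]: "(\<lambda>x. f x \<omega>) \<in> borel_measurable nu" by (rule sec_meas[OF f_meas w])
  note chi_meas[measurable]
  have "WA' r n \<omega> = (\<integral>\<^sup>+x. (\<Sum>g\<in>G n. ennreal (chi n g x * \<bar>c n g \<omega> - f x \<omega>\<bar> powr r)) \<partial>nu)"
    unfolding WA'_def by (intro nn_integral_sum[symmetric]) measurable
  also have "\<dots> = (\<integral>\<^sup>+x. ennreal (\<Sum>g\<in>G n. chi n g x * \<bar>c n g \<omega> - f x \<omega>\<bar> powr r) \<partial>nu)"
    by (intro nn_integral_cong sum_ennreal) (auto intro!: mult_nonneg_nonneg chi_nonneg)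
  also have "\<dots> = U r n \<omega>" unfolding U_def using exactly_one[OF n]
  proof (intro nn_integral_cong_AE, eventually_elim)
    case (elim x)
    then obtain g where g: "g \<in> G n" "chi n g x = 1" "\<forall>g'\<in>G n. g' \<noteq> g \<longrightarrow> chi n g' x = 0" by blast
    show ?case unfolding V_def Z_def
      using collapse[OF g, of "\<lambda>g. \<bar>c n g \<omega> - f x \<omega>\<bar> powr r"] collapse[OF g, of "\<lambda>g. c n g \<omega>"] by simp
  qed
  finally show ?thesis .
qed

lemma inner_le1: "(\<integral>\<^sup>+x. of_bool (\<epsilon> < \<bar>V n x \<omega>\<bar>) \<partial>nu) \<le> 1"
proof -
  have "(\<integral>\<^sup>+x. of_bool (\<epsilon> < \<bar>V n x \<omega>\<bar>) \<partial>nu) \<le> (\<integral>\<^sup>+x. 1 \<partial>nu)"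
    by (intro nn_integral_mono) auto
  also have "\<dots> = 1" by (simp add: Np.emeasure_space_1)
  finally show ?thesis .
qed

lemma inner_leU:
  assumes w: "\<omega> \<in> space M" and e: "\<epsilon> > 0" and r: "r > 0"
  shows "(\<integral>\<^sup>+x. of_bool (\<epsilon> < \<bar>V n x \<omega>\<bar>) \<partial>nu) \<le> U r n \<omega> * ennreal (1 / \<epsilon> powr r)"
proof -
  have Vm[measurable]: "(\<lambda>x. V n x \<omega>) \<in> borel_measurable nu" by (rule sec_meas[OF V_meas w])
  have "(\<integral>\<^sup>+x. of_bool (\<epsilon> < \<bar>V n x \<omega>\<bar>) \<partial>nu) \<le> (\<integral>\<^sup>+x. ennreal (\<bar>V n x \<omega>\<bar> powr r) * ennreal (1 / \<epsilon> powr r) \<partial>nu)"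
  proof (intro nn_integral_mono)
    fix x
    show "of_bool (\<epsilon> < \<bar>V n x \<omega>\<bar>) \<le> ennreal (\<bar>V n x \<omega>\<bar> powr r) * ennreal (1 / \<epsilon> powr r)"
    proof (cases "\<epsilon> < \<bar>V n x \<omega>\<bar>")
      case True
      have "\<epsilon> powr r \<le> \<bar>V n x \<omega>\<bar> powr r" using True e r by (intro powr_mono2) auto
      then have "1 \<le> \<bar>V n x \<omega>\<bar> powr r * (1 / \<epsilon> powr r)" using e by (simp add: field_simps)
      then have "ennreal 1 \<le> ennreal (\<bar>V n x \<omega>\<bar> powr r * (1 / \<epsilon> powr r))" by (rule ennreal_leI)
      then show ?thesis using True by (simp add: ennreal_mult'[symmetric])
    qed simp
  qed
  also have "\<dots> = U r n \<omega> * ennreal (1 / \<epsilon> powr r)" unfolding U_def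
    by (intro nn_integral_multc) measurable
  finally show ?thesis .
qed

lemma A'_imp_A:
  assumes r: "r > 0" and conv: "conv_prob_enn M (WA' r)" and e: "\<epsilon> > 0"
  shows "(\<lambda>n. WA \<epsilon> n) \<longlonglongrightarrow> 0"
proof (rule ennreal_tendsto_0I)
  fix \<delta> :: real assume d: "\<delta> > 0"
  define \<eta> where "\<eta> = \<delta> / 2 * \<epsilon> powr r"
  have eta: "\<eta> > 0" unfolding \<eta>_def using d e by auto
  define S where "S n = {\<omega>\<in>space M. ennreal \<eta> < U r n \<omega>}" for n
  have Sm: "S n \<in> sets M" for n
  proof -
    note U_meas[of r n, measurable]
    show ?thesis unfolding S_def by measurable
  qed
  have "(\<lambda>n. measure M {\<omega>\<in>space M. ennreal \<eta> < WA' r n \<omega>}) \<longlonglongrightarrow> 0"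
    using conv eta unfolding conv_prob_enn_def by auto
  moreover have "eventually (\<lambda>n. measure M {\<omega>\<in>space M. ennreal \<eta> < WA' r n \<omega>} = measure M (S n)) sequentially"
    using eventually_ge_at_top[of 1]
  proof eventually_elim
    case (elim n)
    have "{\<omega>\<in>space M. ennreal \<eta> < WA' r n \<omega>} = S n" unfolding S_def using WA'_eq[OF elim] by auto
    then show ?case by simp
  qed
  ultimately have "(\<lambda>n. measure M (S n)) \<longlonglongrightarrow> 0" by (rule Lim_transform_eventually)
  then have ev: "eventually (\<lambda>n. measure M (S n) < \<delta> / 2) sequentially"
    using d by (intro order_tendstoD(2)) auto
  show "eventually (\<lambda>n. WA \<epsilon> n \<le> ennreal \<delta>) sequentially"
    using ev
  proof eventually_elim
    case (elim n)
    have "WA \<epsilon> n \<le> (\<integral>\<^sup>+\<omega>. indicator (S n) \<omega> + ennreal (\<delta>/2) \<partial>M)"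
      unfolding WA_def
    proof (intro nn_integral_mono)
      fix \<omega> assume w: "\<omega> \<in> space M"
      show "(\<integral>\<^sup>+x. of_bool (\<epsilon> < \<bar>V n x \<omega>\<bar>) \<partial>nu) \<le> indicator (S n) \<omega> + ennreal (\<delta>/2)"
      proof (cases "\<omega> \<in> S n")
        case True
        then have "1 \<le> indicator (S n) \<omega> + ennreal (\<delta>/2)" by simp
        then show ?thesis using inner_le1[of \<epsilon> n \<omega>] by (rule order_trans[rotated])
      next
        case False
        then have "U r n \<omega> \<le> ennreal \<eta>" using w unfolding S_def by auto
        then have "U r n \<omega> * ennreal (1 / \<epsilon> powr r) \<le> ennreal \<eta> * ennreal (1 / \<epsilon> powr r)"
          by (rule mult_right_mono) simp
        also have "\<dots> = ennreal (\<eta> * (1 / \<epsilon> powr r))"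
          using eta by (rule ennreal_mult'[symmetric, OF less_imp_le])
        also have "\<eta> * (1 / \<epsilon> powr r) = \<delta>/2" unfolding \<eta>_def using e by simp
        finally have "U r n \<omega> * ennreal (1 / \<epsilon> powr r) \<le> ennreal (\<delta>/2)" .
        then show ?thesis using order_trans[OF inner_leU[OF w e r, of n]] False by simp
      qed
    qed
    also have "\<dots> = emeasure M (S n) + ennreal (\<delta>/2)"
    proof -
      have "(\<integral>\<^sup>+\<omega>. indicator (S n) \<omega> + ennreal (\<delta>/2) \<partial>M) = (\<integral>\<^sup>+\<omega>. indicator (S n) \<omega> \<partial>M) + (\<integral>\<^sup>+\<omega>. ennreal (\<delta>/2) \<partial>M)"
        by (rule nn_integral_add) (use Sm in auto)
      then show ?thesis using Sm by (simp add: Mp.emeasure_space_1)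
    qed
    also have "\<dots> = ennreal (measure M (S n) + \<delta>/2)"
      using d by (simp add: Mp.emeasure_eq_measure ennreal_plus)
    also have "\<dots> \<le> ennreal \<delta>" using elim by (intro ennreal_leI) simp
    finally show ?case .
  qed
qed

end

context grid begin

interpretation Mp: prob_space M by (rule M)
interpretation Np: prob_space nu by (rule nu)

lemma wsum:
  assumes n: "n \<ge> 1"
  shows "(\<Sum>g\<in>G n. \<integral>\<^sup>+x. ennreal (chi n g x) \<partial>nu) = 1"
proof -
  note chi_meas[measurable]
  have "(\<Sum>g\<in>G n. \<integral>\<^sup>+x. ennreal (chi n g x) \<partial>nu) = (\<integral>\<^sup>+x. (\<Sum>g\<in>G n. ennreal (chi n g x)) \<partial>nu)"
    by (intro nn_integral_sum[symmetric]) measurable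
  also have "\<dots> = (\<integral>\<^sup>+x. 1 \<partial>nu)" using part[OF n]
    by (intro nn_integral_cong_AE) (auto elim!: eventually_mono simp: chi_nonneg)
  also have "\<dots> = 1" by (simp add: Np.emeasure_space_1)
  finally show ?thesis .
qed

lemma Zpow_inner:
  assumes n: "n \<ge> 1" and w: "\<omega> \<in> space M"
  shows "(\<integral>\<^sup>+x. ennreal (\<bar>Z n x \<omega>\<bar> ^ N) \<partial>nu)
       = (\<Sum>g\<in>G n. (\<integral>\<^sup>+x. ennreal (chi n g x) \<partial>nu) * ennreal (\<bar>c n g \<omega>\<bar> ^ N))"
proof -
  note chi_meas[measurable]
  have "(\<integral>\<^sup>+x. ennreal (\<bar>Z n x \<omega>\<bar> ^ N) \<partial>nu)
      = (\<integral>\<^sup>+x. (\<Sum>g\<in>G n. ennreal (chi n g x) * ennreal (\<bar>c n g \<omega>\<bar> ^ N)) \<partial>nu)"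
    using exactly_one[OF n]
  proof (intro nn_integral_cong_AE, eventually_elim)
    case (elim x)
    then obtain g where g: "g \<in> G n" "chi n g x = 1" "\<forall>g'\<in>G n. g' \<noteq> g \<longrightarrow> chi n g' x = 0" by blast
    have "(\<Sum>g\<in>G n. ennreal (chi n g x) * ennreal (\<bar>c n g \<omega>\<bar> ^ N))
        = (\<Sum>g\<in>G n. ennreal (chi n g x * \<bar>c n g \<omega>\<bar> ^ N))"
      by (intro sum.cong refl) (simp add: ennreal_mult chi_nonneg)
    also have "\<dots> = ennreal (\<Sum>g\<in>G n. chi n g x * \<bar>c n g \<omega>\<bar> ^ N)"
      by (intro sum_ennreal) (simp add: chi_nonneg)
    also have "(\<Sum>g\<in>G n. chi n g x * \<bar>c n g \<omega>\<bar> ^ N) = \<bar>Z n x \<omega>\<bar> ^ N"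
      unfolding Z_def using collapse[OF g, of "\<lambda>g. \<bar>c n g \<omega>\<bar> ^ N"] collapse[OF g, of "\<lambda>g. c n g \<omega>"] by simp
    finally show ?case by simp
  qed
  also have "\<dots> = (\<Sum>g\<in>G n. \<integral>\<^sup>+x. ennreal (chi n g x) * ennreal (\<bar>c n g \<omega>\<bar> ^ N) \<partial>nu)"
    by (intro nn_integral_sum) measurable
  also have "\<dots> = (\<Sum>g\<in>G n. (\<integral>\<^sup>+x. ennreal (chi n g x) \<partial>nu) * ennreal (\<bar>c n g \<omega>\<bar> ^ N))"
    by (intro sum.cong refl nn_integral_multc) measurable
  finally show ?thesis .
qed

lemma EZ:
  assumes n: "n \<ge> 1"
    and C: "\<And>n g. g \<in> G n \<Longrightarrow> (\<integral>\<^sup>+\<omega>. ennreal (\<bar>c n g \<omega>\<bar> ^ N) \<partial>M) \<le> ennreal C"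
  shows "(\<integral>\<^sup>+\<omega>. (\<integral>\<^sup>+x. ennreal (\<bar>Z n x \<omega>\<bar> ^ N) \<partial>nu) \<partial>M) \<le> ennreal C"
proof -
  define w where "w g = (\<integral>\<^sup>+x. ennreal (chi n g x) \<partial>nu)" for g
  have cm: "(\<lambda>\<omega>. w g * ennreal (\<bar>c n g \<omega>\<bar> ^ N)) \<in> borel_measurable M" if "g \<in> G n" for g
  proof -
    note c_meas[OF that, measurable]
    show ?thesis by measurable
  qed
  have cm2: "(\<lambda>\<omega>. ennreal (\<bar>c n g \<omega>\<bar> ^ N)) \<in> borel_measurable M" if "g \<in> G n" for g
  proof -
    note c_meas[OF that, measurable]
    show ?thesis by measurable
  qed
  have "(\<integral>\<^sup>+\<omega>. (\<integral>\<^sup>+x. ennreal (\<bar>Z n x \<omega>\<bar> ^ N) \<partial>nu) \<partial>M)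
      = (\<integral>\<^sup>+\<omega>. (\<Sum>g\<in>G n. w g * ennreal (\<bar>c n g \<omega>\<bar> ^ N)) \<partial>M)"
    by (intro nn_integral_cong) (simp add: Zpow_inner[OF n] w_def)
  also have "\<dots> = (\<Sum>g\<in>G n. \<integral>\<^sup>+\<omega>. w g * ennreal (\<bar>c n g \<omega>\<bar> ^ N) \<partial>M)"
    using cm by (intro nn_integral_sum) auto
  also have "\<dots> = (\<Sum>g\<in>G n. w g * (\<integral>\<^sup>+\<omega>. ennreal (\<bar>c n g \<omega>\<bar> ^ N) \<partial>M))"
    using cm2 by (intro sum.cong refl nn_integral_cmult) auto
  also have "\<dots> \<le> (\<Sum>g\<in>G n. w g * ennreal C)"
    by (intro sum_mono mult_left_mono C) auto
  also have "\<dots> = ennreal C"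
    using wsum[OF n] by (simp add: sum_distrib_right[symmetric] w_def)
  finally show ?thesis .
qed

end

lemma sup_min_pow:
  fixes y :: real
  shows "(SUP K::nat. ennreal (min \<bar>y\<bar> (real K) ^ N)) = ennreal (\<bar>y\<bar> ^ N)"
proof (rule antisym)
  show "(SUP K::nat. ennreal (min \<bar>y\<bar> (real K) ^ N)) \<le> ennreal (\<bar>y\<bar> ^ N)"
    by (intro SUP_least ennreal_leI power_mono) auto
next
  obtain K :: nat where "\<bar>y\<bar> \<le> real K" using real_arch_simple by blast
  then have "min \<bar>y\<bar> (real K) = \<bar>y\<bar>" by simp
  then show "ennreal (\<bar>y\<bar> ^ N) \<le> (SUP K::nat. ennreal (min \<bar>y\<bar> (real K) ^ N))"
    by (intro SUP_upper2[of K]) auto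
qed

context grid begin

interpretation Mp: prob_space M by (rule M)
interpretation Np: prob_space nu by (rule nu)

lemma P_prob: "prob_space (M \<Otimes>\<^sub>M nu)" by (rule prob_space_pair[OF M nu])

lemma iter_eq:
  assumes "F \<in> borel_measurable (M \<Otimes>\<^sub>M nu)"
  shows "(\<integral>\<^sup>+\<omega>. (\<integral>\<^sup>+x. F (\<omega>, x) \<partial>nu) \<partial>M) = integral\<^sup>N (M \<Otimes>\<^sub>M nu) F"
  using Np.nn_integral_fst[OF assms] .

lemma Ef:
  assumes C: "\<And>n g. g \<in> G n \<Longrightarrow> (\<integral>\<^sup>+\<omega>. ennreal (\<bar>c n g \<omega>\<bar> ^ N) \<partial>M) \<le> ennreal C" and C0: "0 \<le> C"
    and A1: "(\<lambda>n. WA 1 n) \<longlonglongrightarrow> 0"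
  shows "(\<integral>\<^sup>+p. ennreal (\<bar>f (snd p) (fst p)\<bar> ^ N) \<partial>(M \<Otimes>\<^sub>M nu)) \<le> ennreal (2^N * (C + 1))"
proof -
  interpret P: prob_space "M \<Otimes>\<^sub>M nu" by (rule P_prob)
  note f_meas[measurable] Z_meas[measurable] V_meas[measurable]
  define B where "B = 2^N * (C + 1)"
  have B0: "0 \<le> B" unfolding B_def using C0 by simp
  have hK: "(\<integral>\<^sup>+p. ennreal (min \<bar>f (snd p) (fst p)\<bar> (real K) ^ N) \<partial>(M \<Otimes>\<^sub>M nu)) \<le> ennreal B" for K :: nat
  proof -
    have le: "(\<integral>\<^sup>+p. ennreal (min \<bar>f (snd p) (fst p)\<bar> (real K) ^ N) \<partial>(M \<Otimes>\<^sub>M nu))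
        \<le> ennreal B + ennreal (real K ^ N) * WA 1 n" if n: "n \<ge> 1" for n
    proof -
      have "(\<integral>\<^sup>+p. ennreal (min \<bar>f (snd p) (fst p)\<bar> (real K) ^ N) \<partial>(M \<Otimes>\<^sub>M nu))
        \<le> (\<integral>\<^sup>+p. ennreal (2^N) * ennreal (\<bar>Z n (snd p) (fst p)\<bar> ^ N) + ennreal (2^N)
              + ennreal (real K ^ N) * of_bool (1 < \<bar>V n (snd p) (fst p)\<bar>) \<partial>(M \<Otimes>\<^sub>M nu))"
      proof (intro nn_integral_mono)
        fix p
        define z where "z = Z n (snd p) (fst p)"
        define y where "y = f (snd p) (fst p)"
        have v: "V n (snd p) (fst p) = z - y" unfolding z_def y_def V_def by simp
        have "min \<bar>y\<bar> (real K) ^ N \<le> 2^N * \<bar>z\<bar> ^ N + 2^N + real K ^ N * of_bool (1 < \<bar>z - y\<bar>)"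
        proof (cases "1 < \<bar>z - y\<bar>")
          case True
          have "min \<bar>y\<bar> (real K) ^ N \<le> real K ^ N" by (intro power_mono) auto
          moreover have "0 \<le> (2::real)^N * \<bar>z\<bar> ^ N + 2^N" by simp
          moreover have "real K ^ N * of_bool (1 < \<bar>z - y\<bar>) = real K ^ N" using True by simp
          ultimately show ?thesis by linarith
        next
          case False
          then have "\<bar>y\<bar> \<le> \<bar>z\<bar> + 1" by linarith
          then have "min \<bar>y\<bar> (real K) ^ N \<le> (\<bar>z\<bar> + 1) ^ N" by (intro power_mono) auto
          also have "\<dots> \<le> 2^N * (\<bar>z\<bar> ^ N + 1)" using pow_sum_bound[of "\<bar>z\<bar>" 1 N] by simp
          finally show ?thesis using False by (simp add: algebra_simps)
        qed
        then have "ennreal (min \<bar>y\<bar> (real K) ^ N) \<le> ennreal (2^N * \<bar>z\<bar> ^ N + 2^N + real K ^ N * of_bool (1 < \<bar>z - y\<bar>))"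
          by (rule ennreal_leI)
        also have "\<dots> = ennreal (2^N) * ennreal (\<bar>z\<bar> ^ N) + ennreal (2^N) + ennreal (real K ^ N) * of_bool (1 < \<bar>z - y\<bar>)"
          by (simp add: ennreal_mult)
        finally show "ennreal (min \<bar>f (snd p) (fst p)\<bar> (real K) ^ N) \<le> ennreal (2^N) * ennreal (\<bar>Z n (snd p) (fst p)\<bar> ^ N) + ennreal (2^N)
              + ennreal (real K ^ N) * of_bool (1 < \<bar>V n (snd p) (fst p)\<bar>)"
          unfolding v z_def y_def .
      qed
      also have "\<dots> = (\<integral>\<^sup>+p. ennreal (2^N) * ennreal (\<bar>Z n (snd p) (fst p)\<bar> ^ N) + ennreal (2^N) \<partial>(M \<Otimes>\<^sub>M nu))
           + (\<integral>\<^sup>+p. ennreal (real K ^ N) * of_bool (1 < \<bar>V n (snd p) (fst p)\<bar>) \<partial>(M \<Otimes>\<^sub>M nu))"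
        by (rule nn_integral_add) measurable
      also have "(\<integral>\<^sup>+p. ennreal (2^N) * ennreal (\<bar>Z n (snd p) (fst p)\<bar> ^ N) + ennreal (2^N) \<partial>(M \<Otimes>\<^sub>M nu))
          = (\<integral>\<^sup>+p. ennreal (2^N) * ennreal (\<bar>Z n (snd p) (fst p)\<bar> ^ N) \<partial>(M \<Otimes>\<^sub>M nu)) + (\<integral>\<^sup>+p. ennreal (2^N) \<partial>(M \<Otimes>\<^sub>M nu))"
        by (rule nn_integral_add) measurable
      also have "(\<integral>\<^sup>+p. ennreal (2^N) * ennreal (\<bar>Z n (snd p) (fst p)\<bar> ^ N) \<partial>(M \<Otimes>\<^sub>M nu))
          = ennreal (2^N) * (\<integral>\<^sup>+p. ennreal (\<bar>Z n (snd p) (fst p)\<bar> ^ N) \<partial>(M \<Otimes>\<^sub>M nu))"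
        by (rule nn_integral_cmult) measurable
      also have "(\<integral>\<^sup>+p. ennreal (real K ^ N) * of_bool (1 < \<bar>V n (snd p) (fst p)\<bar>) \<partial>(M \<Otimes>\<^sub>M nu))
          = ennreal (real K ^ N) * (\<integral>\<^sup>+p. of_bool (1 < \<bar>V n (snd p) (fst p)\<bar>) \<partial>(M \<Otimes>\<^sub>M nu))"
        by (rule nn_integral_cmult) measurable
      also have "(\<integral>\<^sup>+p. of_bool (1 < \<bar>V n (snd p) (fst p)\<bar>) \<partial>(M \<Otimes>\<^sub>M nu)) = WA 1 n"
      proof -
        have m1: "(\<lambda>p. of_bool (1 < \<bar>V n (snd p) (fst p)\<bar>) :: ennreal) \<in> borel_measurable (M \<Otimes>\<^sub>M nu)" by measurable
        show ?thesis using iter_eq[OF m1] by (simp add: WA_def)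
      qed
      also have "(\<integral>\<^sup>+p. ennreal (\<bar>Z n (snd p) (fst p)\<bar> ^ N) \<partial>(M \<Otimes>\<^sub>M nu))
          = (\<integral>\<^sup>+\<omega>. (\<integral>\<^sup>+x. ennreal (\<bar>Z n x \<omega>\<bar> ^ N) \<partial>nu) \<partial>M)"
      proof -
        have m1: "(\<lambda>p. ennreal (\<bar>Z n (snd p) (fst p)\<bar> ^ N)) \<in> borel_measurable (M \<Otimes>\<^sub>M nu)" by measurable
        show ?thesis using iter_eq[OF m1] by simp
      qed
      also have "(\<integral>\<^sup>+p. ennreal (2^N) \<partial>(M \<Otimes>\<^sub>M nu)) = ennreal (2^N)"
        by (simp add: P.emeasure_space_1)
      finally have "(\<integral>\<^sup>+p. ennreal (min \<bar>f (snd p) (fst p)\<bar> (real K) ^ N) \<partial>(M \<Otimes>\<^sub>M nu))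
         \<le> ennreal (2^N) * (\<integral>\<^sup>+\<omega>. (\<integral>\<^sup>+x. ennreal (\<bar>Z n x \<omega>\<bar> ^ N) \<partial>nu) \<partial>M) + ennreal (2^N)
           + ennreal (real K ^ N) * WA 1 n" .
      also have "\<dots> \<le> ennreal (2^N) * ennreal C + ennreal (2^N) + ennreal (real K ^ N) * WA 1 n"
        by (intro add_mono mult_left_mono EZ[OF n C]) auto
      also have "ennreal (2^N) * ennreal C + ennreal (2^N) = ennreal B"
        unfolding B_def using C0 by (simp add: ennreal_mult[symmetric] algebra_simps)
      finally show ?thesis .
    qed
    have "(\<lambda>n. ennreal B + ennreal (real K ^ N) * WA 1 n) \<longlonglongrightarrow> ennreal B + ennreal (real K ^ N) * 0"
      by (intro tendsto_add tendsto_const ennreal_tendsto_cmult A1) simp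
    then show ?thesis using le by (intro LIMSEQ_le_const) auto
  qed
  have "(\<integral>\<^sup>+p. ennreal (\<bar>f (snd p) (fst p)\<bar> ^ N) \<partial>(M \<Otimes>\<^sub>M nu))
      = (\<integral>\<^sup>+p. (SUP K::nat. ennreal (min \<bar>f (snd p) (fst p)\<bar> (real K) ^ N)) \<partial>(M \<Otimes>\<^sub>M nu))"
    by (simp add: sup_min_pow)
  also have "\<dots> = (SUP K::nat. \<integral>\<^sup>+p. ennreal (min \<bar>f (snd p) (fst p)\<bar> (real K) ^ N) \<partial>(M \<Otimes>\<^sub>M nu))"
  proof (rule nn_integral_monotone_convergence_SUP)
    show "incseq (\<lambda>K p. ennreal (min \<bar>f (snd p) (fst p)\<bar> (real K) ^ N))"
      by (auto simp: incseq_def le_fun_def intro!: ennreal_leI power_mono)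
  qed measurable
  also have "\<dots> \<le> ennreal B" by (intro SUP_least hK)
  finally show ?thesis unfolding B_def .
qed

end

context grid begin

interpretation Mp: prob_space M by (rule M)
interpretation Np: prob_space nu by (rule nu)

lemma EU_bound:
  assumes n: "n \<ge> 1" and d: "0 < d" "d \<le> K" and r: "0 < r" "r < real N"
    and EZ: "(\<integral>\<^sup>+\<omega>. (\<integral>\<^sup>+x. ennreal (\<bar>Z n x \<omega>\<bar> ^ N) \<partial>nu) \<partial>M) \<le> ennreal C"
    and EF: "(\<integral>\<^sup>+p. ennreal (\<bar>f (snd p) (fst p)\<bar> ^ N) \<partial>(M \<Otimes>\<^sub>M nu)) \<le> ennreal B"
  shows "(\<integral>\<^sup>+\<omega>. U r n \<omega> \<partial>M) \<le> ennreal (d powr r) + ennreal (K powr r) * WA d n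
           + ennreal (2^N / K powr (N - r)) * (ennreal C + ennreal B)"
proof -
  interpret P: prob_space "M \<Otimes>\<^sub>M nu" by (rule P_prob)
  note f_meas[measurable] Z_meas[measurable] V_meas[measurable]
  define a where "a = 2^N / K powr (N - r)"
  have a0: "0 \<le> a" unfolding a_def by simp
  have m0: "(\<lambda>p. ennreal (\<bar>V n (snd p) (fst p)\<bar> powr r)) \<in> borel_measurable (M \<Otimes>\<^sub>M nu)" by measurable
  have "(\<integral>\<^sup>+\<omega>. U r n \<omega> \<partial>M) = (\<integral>\<^sup>+p. ennreal (\<bar>V n (snd p) (fst p)\<bar> powr r) \<partial>(M \<Otimes>\<^sub>M nu))"
    using iter_eq[OF m0] by (simp add: U_def)
  also have "\<dots> \<le> (\<integral>\<^sup>+p. ennreal (d powr r) + ennreal (K powr r) * of_bool (d < \<bar>V n (snd p) (fst p)\<bar>)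
      + ennreal a * (ennreal (\<bar>Z n (snd p) (fst p)\<bar> ^ N) + ennreal (\<bar>f (snd p) (fst p)\<bar> ^ N)) \<partial>(M \<Otimes>\<^sub>M nu))"
  proof (intro nn_integral_mono)
    fix p
    define z where "z = Z n (snd p) (fst p)"
    define y where "y = f (snd p) (fst p)"
    define v where "v = V n (snd p) (fst p)"
    have v: "v = z + (- y)" unfolding z_def y_def v_def V_def by simp
    have "\<bar>v\<bar> ^ N \<le> 2^N * (\<bar>z\<bar> ^ N + \<bar>y\<bar> ^ N)" using pow_sum_bound[of z "-y" N] unfolding v by simp
    then have "\<bar>v\<bar> ^ N / K powr (N - r) \<le> 2^N * (\<bar>z\<bar> ^ N + \<bar>y\<bar> ^ N) / K powr (N - r)"
      by (intro divide_right_mono) auto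
    also have "\<dots> = a * (\<bar>z\<bar> ^ N + \<bar>y\<bar> ^ N)" unfolding a_def by simp
    finally have "\<bar>v\<bar> powr r \<le> d powr r + K powr r * of_bool (d < \<bar>v\<bar>) + a * (\<bar>z\<bar> ^ N + \<bar>y\<bar> ^ N)"
      using split_pow_bound[OF d r, of v] by linarith
    then have "ennreal (\<bar>v\<bar> powr r) \<le> ennreal (d powr r + K powr r * of_bool (d < \<bar>v\<bar>) + a * (\<bar>z\<bar> ^ N + \<bar>y\<bar> ^ N))"
      by (rule ennreal_leI)
    also have "\<dots> = ennreal (d powr r) + ennreal (K powr r) * of_bool (d < \<bar>v\<bar>) + ennreal a * (ennreal (\<bar>z\<bar> ^ N) + ennreal (\<bar>y\<bar> ^ N))"
      using a0 by (simp add: ennreal_mult)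
    finally show "ennreal (\<bar>V n (snd p) (fst p)\<bar> powr r) \<le> ennreal (d powr r) + ennreal (K powr r) * of_bool (d < \<bar>V n (snd p) (fst p)\<bar>)
      + ennreal a * (ennreal (\<bar>Z n (snd p) (fst p)\<bar> ^ N) + ennreal (\<bar>f (snd p) (fst p)\<bar> ^ N))"
      unfolding v_def z_def y_def .
  qed
  also have "\<dots> = (\<integral>\<^sup>+p. ennreal (d powr r) + ennreal (K powr r) * of_bool (d < \<bar>V n (snd p) (fst p)\<bar>) \<partial>(M \<Otimes>\<^sub>M nu))
      + (\<integral>\<^sup>+p. ennreal a * (ennreal (\<bar>Z n (snd p) (fst p)\<bar> ^ N) + ennreal (\<bar>f (snd p) (fst p)\<bar> ^ N)) \<partial>(M \<Otimes>\<^sub>M nu))"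
    by (rule nn_integral_add) measurable
  also have "(\<integral>\<^sup>+p. ennreal (d powr r) + ennreal (K powr r) * of_bool (d < \<bar>V n (snd p) (fst p)\<bar>) \<partial>(M \<Otimes>\<^sub>M nu))
      = (\<integral>\<^sup>+p. ennreal (d powr r) \<partial>(M \<Otimes>\<^sub>M nu)) + (\<integral>\<^sup>+p. ennreal (K powr r) * of_bool (d < \<bar>V n (snd p) (fst p)\<bar>) \<partial>(M \<Otimes>\<^sub>M nu))"
    by (rule nn_integral_add) measurable
  also have "(\<integral>\<^sup>+p. ennreal (d powr r) \<partial>(M \<Otimes>\<^sub>M nu)) = ennreal (d powr r)"
    by (simp add: P.emeasure_space_1)
  also have "(\<integral>\<^sup>+p. ennreal (K powr r) * of_bool (d < \<bar>V n (snd p) (fst p)\<bar>) \<partial>(M \<Otimes>\<^sub>M nu))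
      = ennreal (K powr r) * (\<integral>\<^sup>+p. of_bool (d < \<bar>V n (snd p) (fst p)\<bar>) \<partial>(M \<Otimes>\<^sub>M nu))"
    by (rule nn_integral_cmult) measurable
  also have "(\<integral>\<^sup>+p. of_bool (d < \<bar>V n (snd p) (fst p)\<bar>) \<partial>(M \<Otimes>\<^sub>M nu)) = WA d n"
  proof -
    have m1: "(\<lambda>p. of_bool (d < \<bar>V n (snd p) (fst p)\<bar>) :: ennreal) \<in> borel_measurable (M \<Otimes>\<^sub>M nu)" by measurable
    show ?thesis using iter_eq[OF m1] by (simp add: WA_def)
  qed
  also have "(\<integral>\<^sup>+p. ennreal a * (ennreal (\<bar>Z n (snd p) (fst p)\<bar> ^ N) + ennreal (\<bar>f (snd p) (fst p)\<bar> ^ N)) \<partial>(M \<Otimes>\<^sub>M nu))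
      = ennreal a * ((\<integral>\<^sup>+p. ennreal (\<bar>Z n (snd p) (fst p)\<bar> ^ N) \<partial>(M \<Otimes>\<^sub>M nu)) + (\<integral>\<^sup>+p. ennreal (\<bar>f (snd p) (fst p)\<bar> ^ N) \<partial>(M \<Otimes>\<^sub>M nu)))"
    by (subst nn_integral_cmult, measurable, subst nn_integral_add, measurable)
  also have "(\<integral>\<^sup>+p. ennreal (\<bar>Z n (snd p) (fst p)\<bar> ^ N) \<partial>(M \<Otimes>\<^sub>M nu))
      = (\<integral>\<^sup>+\<omega>. (\<integral>\<^sup>+x. ennreal (\<bar>Z n x \<omega>\<bar> ^ N) \<partial>nu) \<partial>M)"
  proof -
    have m1: "(\<lambda>p. ennreal (\<bar>Z n (snd p) (fst p)\<bar> ^ N)) \<in> borel_measurable (M \<Otimes>\<^sub>M nu)" by measurable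
    show ?thesis using iter_eq[OF m1] by simp
  qed
  also have "ennreal a * ((\<integral>\<^sup>+\<omega>. (\<integral>\<^sup>+x. ennreal (\<bar>Z n x \<omega>\<bar> ^ N) \<partial>nu) \<partial>M)
       + (\<integral>\<^sup>+p. ennreal (\<bar>f (snd p) (fst p)\<bar> ^ N) \<partial>(M \<Otimes>\<^sub>M nu))) \<le> ennreal a * (ennreal C + ennreal B)"
    by (intro mult_left_mono add_mono EZ EF) auto
  finally show ?thesis unfolding a_def by (simp add: add_mono)
qed

lemma A_imp_A':
  assumes A: "\<And>\<epsilon>. \<epsilon> > 0 \<Longrightarrow> (\<lambda>n. WA \<epsilon> n) \<longlonglongrightarrow> 0"
    and mom: "\<And>p::nat. p \<ge> 2 \<Longrightarrow> \<exists>C. \<forall>n g. g \<in> G n \<longrightarrow> (\<integral>\<^sup>+\<omega>. ennreal (\<bar>c n g \<omega>\<bar> ^ p) \<partial>M) \<le> ennreal C"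
    and r: "r > 0"
  shows "conv_prob_enn M (WA' r)"
  unfolding conv_prob_enn_def
proof (intro allI impI)
  fix \<eta> :: real assume eta: "\<eta> > 0"
  define N where "N = nat \<lceil>r\<rceil> + 1"
  have "1 \<le> \<lceil>r\<rceil>" using r by (simp add: one_le_ceiling)
  then have N1: "N \<ge> 2" unfolding N_def by linarith
  have "real (nat \<lceil>r\<rceil>) = real_of_int \<lceil>r\<rceil>" using r by simp
  then have Nr: "real N - r \<ge> 1" unfolding N_def using le_of_int_ceiling[of r] by simp
  obtain C0 where C0: "\<forall>n g. g \<in> G n \<longrightarrow> (\<integral>\<^sup>+\<omega>. ennreal (\<bar>c n g \<omega>\<bar> ^ N) \<partial>M) \<le> ennreal C0"
    using mom[OF N1] by blast
  define C where "C = max C0 0"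
  have Cnn: "0 \<le> C" unfolding C_def by simp
  have C: "(\<integral>\<^sup>+\<omega>. ennreal (\<bar>c n g \<omega>\<bar> ^ N) \<partial>M) \<le> ennreal C" if "g \<in> G n" for n g
    using C0 that order_trans[OF _ ennreal_leI[of C0 C]] unfolding C_def by force
  define B where "B = 2^N * (C + 1)"
  have Bnn: "0 \<le> B" unfolding B_def using Cnn by simp
  have EF: "(\<integral>\<^sup>+p. ennreal (\<bar>f (snd p) (fst p)\<bar> ^ N) \<partial>(M \<Otimes>\<^sub>M nu)) \<le> ennreal B"
    unfolding B_def by (rule Ef[OF C Cnn A]) auto
  show "(\<lambda>n. measure M {\<omega>\<in>space M. ennreal \<eta> < WA' r n \<omega>}) \<longlonglongrightarrow> 0"
  proof (rule real_tendsto_0I)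
    fix e :: real assume e: "e > 0"
    define t where "t = \<eta> * e"
    have t: "t > 0" unfolding t_def using eta e by simp
    define d where "d = (t/3) powr (1/r)"
    have d0: "d > 0" unfolding d_def using t by simp
    have dr: "d powr r = t/3" unfolding d_def using t r by (simp add: powr_powr)
    define K where "K = max (max d 1) (3 * 2^N * (C + B) / t)"
    have K: "d \<le> K" "1 \<le> K" "3 * 2^N * (C + B) / t \<le> K" unfolding K_def by auto
    have "K powr 1 \<le> K powr (real N - r)" using K(2) Nr by (intro powr_mono) auto
    then have KK: "K \<le> K powr (real N - r)" using K(2) by simp
    have third: "2^N / K powr (real N - r) * (C + B) \<le> t/3"
    proof -
      have "2^N / K powr (real N - r) * (C + B) \<le> 2^N / K * (C + B)"
        using KK K(2) Cnn Bnn by (intro mult_right_mono divide_left_mono) auto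
      also have "\<dots> \<le> t/3" using K(3) K(2) t by (simp add: field_simps)
      finally show ?thesis .
    qed
    have rN: "r < real N" using Nr by simp
    have "(\<lambda>n. ennreal (K powr r) * WA d n) \<longlonglongrightarrow> ennreal (K powr r) * 0"
      by (intro ennreal_tendsto_cmult A d0) simp
    then have ev: "eventually (\<lambda>n. ennreal (K powr r) * WA d n < ennreal (t/3)) sequentially"
      using t by (intro order_tendstoD(2)) auto
    show "eventually (\<lambda>n. measure M {\<omega>\<in>space M. ennreal \<eta> < WA' r n \<omega>} \<le> e) sequentially"
      using ev eventually_ge_at_top[of 1]
    proof eventually_elim
      case (elim n)
      define S where "S = {\<omega>\<in>space M. ennreal \<eta> < U r n \<omega>}"
      have Seq: "{\<omega>\<in>space M. ennreal \<eta> < WA' r n \<omega>} = S"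
        unfolding S_def using WA'_eq[OF elim(2)] by auto
      have Sm: "S \<in> sets M"
      proof -
        note U_meas[of r n, measurable]
        show ?thesis unfolding S_def by measurable
      qed
      have "(\<integral>\<^sup>+\<omega>. U r n \<omega> \<partial>M) \<le> ennreal (d powr r) + ennreal (K powr r) * WA d n
           + ennreal (2^N / K powr (N - r)) * (ennreal C + ennreal B)"
        by (rule EU_bound[OF elim(2) d0 K(1) r rN EZ[OF elim(2) C] EF])
      also have "\<dots> \<le> ennreal (t/3) + ennreal (t/3) + ennreal (t/3)"
      proof (intro add_mono)
        show "ennreal (d powr r) \<le> ennreal (t/3)" unfolding dr by (rule order_refl)
        show "ennreal (K powr r) * WA d n \<le> ennreal (t/3)" using elim(1) by simp
        have "ennreal (2^N / K powr (N - r)) * (ennreal C + ennreal B) = ennreal (2^N / K powr (real N - r)) * ennreal (C + B)"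
          using Cnn Bnn by simp
        also have "\<dots> = ennreal (2^N / K powr (real N - r) * (C + B))"
          by (rule ennreal_mult[symmetric]) (use Cnn Bnn in auto)
        also have "\<dots> \<le> ennreal (t/3)" using third by (rule ennreal_leI)
        finally show "ennreal (2^N / K powr (N - r)) * (ennreal C + ennreal B) \<le> ennreal (t/3)" .
      qed
      also have "\<dots> = ennreal \<eta> * ennreal e"
        using t eta e by (simp add: ennreal_mult[symmetric] t_def del: ennreal_plus) (simp add: ennreal_plus[symmetric])
      finally have EU: "(\<integral>\<^sup>+\<omega>. U r n \<omega> \<partial>M) \<le> ennreal \<eta> * ennreal e" .
      have "ennreal \<eta> * emeasure M S = (\<integral>\<^sup>+\<omega>. ennreal \<eta> * indicator S \<omega> \<partial>M)"
        using Sm by (simp add: nn_integral_cmult_indicator)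
      also have "\<dots> \<le> (\<integral>\<^sup>+\<omega>. U r n \<omega> \<partial>M)"
        by (intro nn_integral_mono) (auto simp: S_def indicator_def less_imp_le)
      finally have "ennreal \<eta> * emeasure M S \<le> ennreal \<eta> * ennreal e" using EU by simp
      then have "emeasure M S \<le> ennreal e" using eta by (subst (asm) ennreal_mult_le_mult_iff) auto
      then have "measure M S \<le> e" using e by (simp add: Mp.emeasure_eq_measure)
      then show ?case using Seq by simp
    qed
  qed simp
qed

end

lemma Pt0: "Pt 0 = count_space {\<lambda>_. undefined}" unfolding Pt_def by (simp add: PiM_empty)

lemma prod_list_map_nth: "prod_list (map f xs) = (\<Prod>j<length xs. f (xs ! j))"
  by (induct xs) (simp_all add: prod.lessThan_Suc_shift del: prod.lessThan_Suc)

lemma poly_deriv0: "poly_deriv W R 0 ts \<omega> = poly_val W R \<omega>"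
  unfolding poly_deriv_def poly_val_def
  by (intro arg_cong[where f=sum_list] map_cong refl) (auto simp: prod_list_map_nth)

lemma sq_powr: "(a\<^sup>2) powr (p/2) = \<bar>a\<bar> powr p" for a p :: real
proof (cases "a = 0")
  case False
  have "a\<^sup>2 = \<bar>a\<bar> powr 2" using False by (simp add: powr_realpow)
  then have "(a\<^sup>2) powr (p/2) = (\<bar>a\<bar> powr 2) powr (p/2)" by simp
  also have "\<dots> = \<bar>a\<bar> powr (2 * (p/2))" by (rule powr_powr)
  finally show ?thesis by simp
qed simp

lemma Lp_L2_dist0:
  "Lp_L2_dist M p 0 P G = (\<integral>\<^sup>+\<omega>. ennreal (\<bar>P (\<lambda>_. undefined) \<omega> - G (\<lambda>_. undefined) \<omega>\<bar> powr p) \<partial>M)"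
  unfolding Lp_L2_dist_def Pt0
  by (intro nn_integral_cong) (simp add: nn_integral_count_space_finite ennpow_def sq_powr)

lemma prod_list_meas:
  assumes "\<And>h. h \<in> set hs \<Longrightarrow> g h \<in> borel_measurable M"
  shows "(\<lambda>\<omega>. prod_list (map (\<lambda>h. g h \<omega>) hs) :: real) \<in> borel_measurable M"
  using assms by (induct hs) auto

lemma poly_val_meas:
  assumes iso: "isonormal M W" and v: "valid_rep R"
  shows "poly_val W R \<in> borel_measurable M"
proof -
  have W: "W h \<in> borel_measurable M" if "L2plus h" for h using iso that unfolding isonormal_def by blast
  have "(\<lambda>\<omega>. sum_list (map (\<lambda>(c, hs). c * prod_list (map (\<lambda>h. W h \<omega>) hs)) R)) \<in> borel_measurable M"
    using v
  proof (induct R)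
    case (Cons a R)
    obtain c hs where a: "a = (c, hs)" by (cases a)
    have v1: "\<forall>h\<in>set hs. L2plus h" using Cons(2) a unfolding valid_rep_def by auto
    have vR: "valid_rep R" using Cons(2) unfolding valid_rep_def by auto
    have "(\<lambda>\<omega>. prod_list (map (\<lambda>h. W h \<omega>) hs)) \<in> borel_measurable M"
      using v1 W by (intro prod_list_meas) auto
    then show ?case using Cons(1)[OF vR] a by auto
  qed simp
  then show ?thesis unfolding poly_val_def[abs_def] .
qed

lemma powr_sum_bound:
  fixes x y p :: real assumes "p \<ge> 0"
  shows "\<bar>x + y\<bar> powr p \<le> 2 powr p * (\<bar>x\<bar> powr p + \<bar>y\<bar> powr p)"
proof -
  have "\<bar>x + y\<bar> powr p \<le> (2 * max \<bar>x\<bar> \<bar>y\<bar>) powr p" by (intro powr_mono2) (use assms in auto)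
  also have "\<dots> = 2 powr p * max \<bar>x\<bar> \<bar>y\<bar> powr p" by (simp add: powr_mult)
  also have "max \<bar>x\<bar> \<bar>y\<bar> powr p \<le> \<bar>x\<bar> powr p + \<bar>y\<bar> powr p" by (auto simp: max_def)
  finally show ?thesis by simp
qed

lemma version0:
  assumes P: "prob_space M" and iso: "isonormal M W" and md: "malliavin_density M W F 0 G"
    and Fm: "F \<in> borel_measurable M"
  shows "AE \<omega> in M. F \<omega> = G (\<lambda>_. undefined) \<omega>"
proof -
  define x0 :: "nat \<Rightarrow> real" where "x0 = (\<lambda>_. undefined)"
  obtain p R where p: "p \<ge> 1" and vR: "\<forall>m. valid_rep (R m)"
    and L1: "(\<lambda>m. pmoment M p (\<lambda>\<omega>. poly_val W (R m) \<omega> - F \<omega>)) \<longlonglongrightarrow> 0"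
    and L2: "(\<lambda>m. Lp_L2_dist M p 0 (poly_deriv W (R m) 0) G) \<longlonglongrightarrow> 0"
    and Gm: "(\<lambda>(ts, \<omega>). G ts \<omega>) \<in> borel_measurable (Pt 0 \<Otimes>\<^sub>M M)"
    using md unfolding malliavin_density_def by blast
  have G0m[measurable]: "(\<lambda>\<omega>. G x0 \<omega>) \<in> borel_measurable M"
    using measurable_Pair2[OF Gm, of x0] by (simp add: Pt0 x0_def)
  note Fm[measurable]
  have Pm[measurable]: "poly_val W (R m) \<in> borel_measurable M" for m by (rule poly_val_meas[OF iso vR[rule_format]])
  have L2': "(\<lambda>m. \<integral>\<^sup>+\<omega>. ennreal (\<bar>poly_val W (R m) \<omega> - G x0 \<omega>\<bar> powr p) \<partial>M) \<longlonglongrightarrow> 0"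
    using L2 by (simp add: Lp_L2_dist0 poly_deriv0 x0_def)
  have bound: "(\<integral>\<^sup>+\<omega>. ennreal (\<bar>F \<omega> - G x0 \<omega>\<bar> powr p) \<partial>M)
     \<le> ennreal (2 powr p) * (pmoment M p (\<lambda>\<omega>. poly_val W (R m) \<omega> - F \<omega>)
          + (\<integral>\<^sup>+\<omega>. ennreal (\<bar>poly_val W (R m) \<omega> - G x0 \<omega>\<bar> powr p) \<partial>M))" for m
  proof -
    have "(\<integral>\<^sup>+\<omega>. ennreal (\<bar>F \<omega> - G x0 \<omega>\<bar> powr p) \<partial>M)
      \<le> (\<integral>\<^sup>+\<omega>. ennreal (2 powr p) * (ennreal (\<bar>poly_val W (R m) \<omega> - F \<omega>\<bar> powr p)
            + ennreal (\<bar>poly_val W (R m) \<omega> - G x0 \<omega>\<bar> powr p)) \<partial>M)"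
    proof (intro nn_integral_mono)
      fix \<omega>
      have e1: "F \<omega> - G x0 \<omega> = (F \<omega> - poly_val W (R m) \<omega>) + (poly_val W (R m) \<omega> - G x0 \<omega>)" by simp
      have "\<bar>F \<omega> - G x0 \<omega>\<bar> powr p \<le> 2 powr p * (\<bar>F \<omega> - poly_val W (R m) \<omega>\<bar> powr p + \<bar>poly_val W (R m) \<omega> - G x0 \<omega>\<bar> powr p)"
        by (subst e1, rule powr_sum_bound) (use p in simp)
      also have "\<bar>F \<omega> - poly_val W (R m) \<omega>\<bar> = \<bar>poly_val W (R m) \<omega> - F \<omega>\<bar>" by (rule abs_minus_commute)
      finally have "ennreal (\<bar>F \<omega> - G x0 \<omega>\<bar> powr p) \<le> ennreal (2 powr p * (\<bar>poly_val W (R m) \<omega> - F \<omega>\<bar> powr p + \<bar>poly_val W (R m) \<omega> - G x0 \<omega>\<bar> powr p))"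
        by (rule ennreal_leI)
      also have "\<dots> = ennreal (2 powr p) * (ennreal (\<bar>poly_val W (R m) \<omega> - F \<omega>\<bar> powr p)
            + ennreal (\<bar>poly_val W (R m) \<omega> - G x0 \<omega>\<bar> powr p))" by (simp add: ennreal_mult)
      finally show "ennreal (\<bar>F \<omega> - G x0 \<omega>\<bar> powr p) \<le> ennreal (2 powr p) * (ennreal (\<bar>poly_val W (R m) \<omega> - F \<omega>\<bar> powr p)
            + ennreal (\<bar>poly_val W (R m) \<omega> - G x0 \<omega>\<bar> powr p))" .
    qed
    also have "\<dots> = ennreal (2 powr p) * (pmoment M p (\<lambda>\<omega>. poly_val W (R m) \<omega> - F \<omega>)
          + (\<integral>\<^sup>+\<omega>. ennreal (\<bar>poly_val W (R m) \<omega> - G x0 \<omega>\<bar> powr p) \<partial>M))"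
      unfolding pmoment_def by (subst nn_integral_cmult, measurable, subst nn_integral_add, measurable)
    finally show ?thesis .
  qed
  have "(\<lambda>m. ennreal (2 powr p) * (pmoment M p (\<lambda>\<omega>. poly_val W (R m) \<omega> - F \<omega>)
          + (\<integral>\<^sup>+\<omega>. ennreal (\<bar>poly_val W (R m) \<omega> - G x0 \<omega>\<bar> powr p) \<partial>M))) \<longlonglongrightarrow> ennreal (2 powr p) * (0 + 0)"
    by (intro ennreal_tendsto_cmult tendsto_add L1 L2') simp
  then have "(\<integral>\<^sup>+\<omega>. ennreal (\<bar>F \<omega> - G x0 \<omega>\<bar> powr p) \<partial>M) \<le> ennreal (2 powr p) * (0 + 0)"
    using bound by (intro LIMSEQ_le_const) auto
  then have "(\<integral>\<^sup>+\<omega>. ennreal (\<bar>F \<omega> - G x0 \<omega>\<bar> powr p) \<partial>M) = 0" by simp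
  then have "AE \<omega> in M. ennreal (\<bar>F \<omega> - G x0 \<omega>\<bar> powr p) = 0"
    by (subst (asm) nn_integral_0_iff_AE) measurable
  then show ?thesis unfolding x0_def[symmetric] by eventually_elim simp
qed

lemma tangent_pow:
  fixes y c :: real and p :: nat
  assumes y: "0 \<le> y" and c: "0 \<le> c" and p: "p \<ge> 1"
  shows "c ^ p + real p * c ^ (p - 1) * (y - c) \<le> y ^ p"
proof (cases "c = 0")
  case True
  then show ?thesis
  proof (cases "p = 1")
    case False
    then show ?thesis using True p y by (simp add: power_0_left)
  qed simp
next
  case False
  then have c0: "c > 0" using c by simp
  define x where "x = y / c - 1"
  have "-1 \<le> x" unfolding x_def using y c0 by simp
  from Bernoulli_inequality[OF this, of p]
  have "1 + real p * x \<le> (y / c) ^ p" unfolding x_def by simp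
  then have "c ^ p * (1 + real p * x) \<le> c ^ p * (y / c) ^ p" using c0 by (intro mult_left_mono) auto
  also have "c ^ p * (y / c) ^ p = y ^ p" using c0 by (simp add: power_divide)
  also have "c ^ p * (1 + real p * x) = c ^ p + real p * c ^ (p - 1) * (y - c)"
  proof -
    have cp: "c ^ p = c * c ^ (p - 1)" using p by (metis One_nat_def Suc_pred' less_le_trans power_Suc zero_less_one)
    have "c ^ p * (real p * x) = real p * c ^ (p - 1) * (c * x)" using cp by simp
    also have "c * x = y - c" unfolding x_def using c0 by (simp add: field_simps)
    finally show ?thesis by (simp add: algebra_simps)
  qed
  finally show ?thesis .
qed

lemma jensen_weight:
  fixes \<mu> :: "'b measure" and w g :: "'b \<Rightarrow> real"
  assumes w01: "\<And>y. w y = 0 \<or> w y = 1" and wm[measurable]: "w \<in> borel_measurable \<mu>"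
    and gm[measurable]: "g \<in> borel_measurable \<mu>"
    and wint: "(\<integral>\<^sup>+y. ennreal (w y) \<partial>\<mu>) = ennreal \<alpha>" and \<alpha>: "\<alpha> > 0" and p: "p \<ge> 1"
  shows "ennreal (\<bar>(1/\<alpha>) * (\<integral>y. w y * g y \<partial>\<mu>)\<bar> ^ p) \<le> ennreal (1/\<alpha>) * (\<integral>\<^sup>+y. ennreal (w y * \<bar>g y\<bar> ^ p) \<partial>\<mu>)"
proof (cases "integrable \<mu> (\<lambda>y. w y * g y)")
  case False
  then show ?thesis using p by (simp add: not_integrable_integral_eq power_0_left)
next
  case int: True
  have w0: "0 \<le> w y" for y using w01[of y] by auto
  have wint': "integrable \<mu> w" using wint w0 by (intro integrableI_nn_integral_finite) auto
  have intw: "(\<integral>y. w y \<partial>\<mu>) = \<alpha>" using wint w0 \<alpha>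
    by (subst integral_eq_nn_integral) auto
  have int_abs: "integrable \<mu> (\<lambda>y. w y * \<bar>g y\<bar>)"
  proof -
    have "integrable \<mu> (\<lambda>y. \<bar>w y * g y\<bar>)" using int by simp
    moreover have "\<bar>w y * g y\<bar> = w y * \<bar>g y\<bar>" for y using w0[of y] by (simp add: abs_mult)
    ultimately show ?thesis by simp
  qed
  define m where "m = (\<integral>y. w y * \<bar>g y\<bar> \<partial>\<mu>)"
  have m0: "0 \<le> m" unfolding m_def using w0 by (intro integral_nonneg_AE) auto
  have absle: "\<bar>\<integral>y. w y * g y \<partial>\<mu>\<bar> \<le> m"
  proof -
    have "\<bar>\<integral>y. w y * g y \<partial>\<mu>\<bar> \<le> (\<integral>y. \<bar>w y * g y\<bar> \<partial>\<mu>)" by (rule integral_abs_bound)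
    also have "\<dots> = m" unfolding m_def using w0 by (intro Bochner_Integration.integral_cong) (auto simp: abs_mult)
    finally show ?thesis .
  qed
  define c where "c = m / \<alpha>"
  have c0: "0 \<le> c" unfolding c_def using m0 \<alpha> by simp
  have lhs: "\<bar>(1/\<alpha>) * (\<integral>y. w y * g y \<partial>\<mu>)\<bar> ^ p \<le> c ^ p"
  proof -
    have "\<bar>(1/\<alpha>) * (\<integral>y. w y * g y \<partial>\<mu>)\<bar> \<le> c" unfolding c_def using absle \<alpha>
      by (simp add: abs_mult divide_right_mono)
    then show ?thesis by (intro power_mono) auto
  qed
  show ?thesis
  proof (cases "(\<integral>\<^sup>+y. ennreal (w y * \<bar>g y\<bar> ^ p) \<partial>\<mu>) = \<top>")
    case True
    then show ?thesis using \<alpha> by (simp add: ennreal_mult_top)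
  next
    case False
    then obtain I where I: "(\<integral>\<^sup>+y. ennreal (w y * \<bar>g y\<bar> ^ p) \<partial>\<mu>) = ennreal I" "0 \<le> I"
      by (cases "(\<integral>\<^sup>+y. ennreal (w y * \<bar>g y\<bar> ^ p) \<partial>\<mu>)") auto
    have intp: "integrable \<mu> (\<lambda>y. w y * \<bar>g y\<bar> ^ p)" using I w0
      by (intro integrableI_nn_integral_finite[where x=I]) auto
    have Ieq: "(\<integral>y. w y * \<bar>g y\<bar> ^ p \<partial>\<mu>) = I" using I w0
      by (subst integral_eq_nn_integral) auto
    have pt: "w y * c ^ p + real p * c ^ (p - 1) * (w y * \<bar>g y\<bar> - w y * c) \<le> w y * \<bar>g y\<bar> ^ p" for y
    proof (cases "w y = 0")
      case False
      then have "w y = 1" using w01 by auto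
      then show ?thesis using tangent_pow[of "\<bar>g y\<bar>" c p] c0 p by simp
    qed simp
    have "(\<integral>y. w y * c ^ p + real p * c ^ (p - 1) * (w y * \<bar>g y\<bar> - w y * c) \<partial>\<mu>) \<le> (\<integral>y. w y * \<bar>g y\<bar> ^ p \<partial>\<mu>)"
      using pt int_abs wint' intp by (intro integral_mono) auto
    moreover have "(\<integral>y. w y * c ^ p + real p * c ^ (p - 1) * (w y * \<bar>g y\<bar> - w y * c) \<partial>\<mu>)
        = \<alpha> * c ^ p + real p * c ^ (p - 1) * (m - \<alpha> * c)"
      using int_abs wint' by (simp add: m_def intw)
    moreover have "m - \<alpha> * c = 0" unfolding c_def using \<alpha> by simp
    ultimately have "\<alpha> * c ^ p \<le> I" using Ieq by simp
    then have "c ^ p \<le> (1/\<alpha>) * I" using \<alpha> by (simp add: field_simps)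
    then have "\<bar>(1/\<alpha>) * (\<integral>y. w y * g y \<partial>\<mu>)\<bar> ^ p \<le> (1/\<alpha>) * I" using lhs by linarith
    then have "ennreal (\<bar>(1/\<alpha>) * (\<integral>y. w y * g y \<partial>\<mu>)\<bar> ^ p) \<le> ennreal ((1/\<alpha>) * I)" by (rule ennreal_leI)
    also have "\<dots> = ennreal (1/\<alpha>) * ennreal I" by (rule ennreal_mult) (use \<alpha> I(2) in auto)
    finally show ?thesis using I(1) by simp
  qed
qed

lemma D_moment:
  fixes \<mu> :: "'b measure" and M :: "'a measure" and w :: "'b \<Rightarrow> real" and G :: "'b \<Rightarrow> 'a \<Rightarrow> real"
  assumes sf: "sigma_finite_measure \<mu>" and PM: "prob_space M"
    and w01: "\<And>y. w y = 0 \<or> w y = 1" and wm[measurable]: "w \<in> borel_measurable \<mu>"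
    and wint: "(\<integral>\<^sup>+y. ennreal (w y) \<partial>\<mu>) = ennreal \<alpha>" and \<alpha>: "\<alpha> > 0" and p: "p \<ge> 1"
    and Gm: "(\<lambda>(y, \<omega>). G y \<omega>) \<in> borel_measurable (\<mu> \<Otimes>\<^sub>M M)"
    and bnd: "\<And>y. y \<in> space \<mu> \<Longrightarrow> w y \<noteq> 0 \<Longrightarrow> (\<integral>\<^sup>+\<omega>. ennreal (\<bar>G y \<omega>\<bar> ^ p) \<partial>M) \<le> ennreal C"
    and C: "0 \<le> C"
  shows "(\<integral>\<^sup>+\<omega>. ennreal (\<bar>(1/\<alpha>) * (\<integral>y. w y * G y \<omega> \<partial>\<mu>)\<bar> ^ p) \<partial>M) \<le> ennreal C"
proof -
  interpret PS: pair_sigma_finite \<mu> M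
    unfolding pair_sigma_finite_def using sf prob_space_imp_sigma_finite[OF PM] by simp
  have w0: "0 \<le> w y" for y using w01[of y] by auto
  have Gm'[measurable]: "(\<lambda>x. G (fst x) (snd x)) \<in> borel_measurable (\<mu> \<Otimes>\<^sub>M M)"
    using Gm by (simp add: split_beta')
  have g1: "(\<lambda>y. G y \<omega>) \<in> borel_measurable \<mu>" if "\<omega> \<in> space M" for \<omega>
    using measurable_Pair1[OF Gm' that] by simp
  have g2: "(\<lambda>\<omega>. G y \<omega>) \<in> borel_measurable M" if "y \<in> space \<mu>" for y
    using measurable_Pair2[OF Gm' that] by simp
  have "(\<integral>\<^sup>+\<omega>. ennreal (\<bar>(1/\<alpha>) * (\<integral>y. w y * G y \<omega> \<partial>\<mu>)\<bar> ^ p) \<partial>M)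
      \<le> (\<integral>\<^sup>+\<omega>. (\<integral>\<^sup>+y. ennreal (1/\<alpha>) * ennreal (w y * \<bar>G y \<omega>\<bar> ^ p) \<partial>\<mu>) \<partial>M)"
  proof (intro nn_integral_mono)
    fix \<omega> assume w: "\<omega> \<in> space M"
    note g1[OF w, measurable]
    have "ennreal (\<bar>(1/\<alpha>) * (\<integral>y. w y * G y \<omega> \<partial>\<mu>)\<bar> ^ p) \<le> ennreal (1/\<alpha>) * (\<integral>\<^sup>+y. ennreal (w y * \<bar>G y \<omega>\<bar> ^ p) \<partial>\<mu>)"
      by (rule jensen_weight[OF w01 wm g1[OF w] wint \<alpha> p])
    also have "\<dots> = (\<integral>\<^sup>+y. ennreal (1/\<alpha>) * ennreal (w y * \<bar>G y \<omega>\<bar> ^ p) \<partial>\<mu>)"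
      by (rule nn_integral_cmult[symmetric]) measurable
    finally show "ennreal (\<bar>(1/\<alpha>) * (\<integral>y. w y * G y \<omega> \<partial>\<mu>)\<bar> ^ p) \<le> (\<integral>\<^sup>+y. ennreal (1/\<alpha>) * ennreal (w y * \<bar>G y \<omega>\<bar> ^ p) \<partial>\<mu>)" .
  qed
  also have "\<dots> = (\<integral>\<^sup>+y. (\<integral>\<^sup>+\<omega>. ennreal (1/\<alpha>) * ennreal (w y * \<bar>G y \<omega>\<bar> ^ p) \<partial>M) \<partial>\<mu>)"
    by (rule PS.Fubini') measurable
  also have "\<dots> \<le> (\<integral>\<^sup>+y. ennreal (1/\<alpha>) * ennreal C * ennreal (w y) \<partial>\<mu>)"
  proof (intro nn_integral_mono)
    fix y assume y: "y \<in> space \<mu>"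
    note g2[OF y, measurable]
    have "(\<integral>\<^sup>+\<omega>. ennreal (1/\<alpha>) * ennreal (w y * \<bar>G y \<omega>\<bar> ^ p) \<partial>M)
        = (\<integral>\<^sup>+\<omega>. (ennreal (1/\<alpha>) * ennreal (w y)) * ennreal (\<bar>G y \<omega>\<bar> ^ p) \<partial>M)"
      using w0 by (intro nn_integral_cong) (simp add: ennreal_mult mult.assoc)
    also have "\<dots> = (ennreal (1/\<alpha>) * ennreal (w y)) * (\<integral>\<^sup>+\<omega>. ennreal (\<bar>G y \<omega>\<bar> ^ p) \<partial>M)"
      by (rule nn_integral_cmult) measurable
    also have "\<dots> \<le> ennreal (1/\<alpha>) * ennreal C * ennreal (w y)"
    proof (cases "w y = 0")
      case False
      have "(ennreal (1/\<alpha>) * ennreal (w y)) * (\<integral>\<^sup>+\<omega>. ennreal (\<bar>G y \<omega>\<bar> ^ p) \<partial>M) \<le> (ennreal (1/\<alpha>) * ennreal (w y)) * ennreal C"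
        by (intro mult_left_mono bnd[OF y False]) auto
      then show ?thesis by (simp add: mult_ac)
    qed simp
    finally show "(\<integral>\<^sup>+\<omega>. ennreal (1/\<alpha>) * ennreal (w y * \<bar>G y \<omega>\<bar> ^ p) \<partial>M) \<le> ennreal (1/\<alpha>) * ennreal C * ennreal (w y)" .
  qed
  also have "\<dots> = ennreal (1/\<alpha>) * ennreal C * ennreal \<alpha>"
    by (subst nn_integral_cmult) (auto simp: wint)
  also have "\<dots> = ennreal C" using \<alpha> C
    by (simp add: ennreal_mult[symmetric] del: ennreal_mult_eq_top_iff) 
  finally show ?thesis .
qed

lemma Pt_psf: "product_sigma_finite (\<lambda>_::nat. restrict_space lborel {0::real..})"
  unfolding product_sigma_finite_def
  by (auto intro: sigma_finite_measure_restrict_space sigma_finite_lborel)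

lemma Pt_sf: "sigma_finite_measure (Pt k)"
  unfolding Pt_def by (rule product_sigma_finite.sigma_finite[OF Pt_psf]) simp

lemma space_Pt: "space (Pt k) = PiE {..<k} (\<lambda>_. {0..})"
  unfolding Pt_def by (simp add: space_PiM space_restrict_space)

lemma Iv_borel[measurable]: "Iv n k \<in> sets borel" unfolding Iv_def by simp

lemma Iv_sub: assumes "1 \<le> k" "k \<le> n" shows "Iv n k \<subseteq> {0..1}"
  using assms unfolding Iv_def by (auto simp: field_simps intro: order_trans[of _ "real k"])

lemma emeasure_Iv: assumes "1 \<le> n" shows "emeasure lborel (Iv n k) = ennreal (1 / real n)"
proof -
  have "(real k - 1) / real n \<le> real k / real n" using assms by (simp add: divide_right_mono)
  then show ?thesis unfolding Iv_def using assms by (simp add: diff_divide_distrib[symmetric])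
qed

lemma ind_comp_meas[measurable]:
  assumes "i < k" "A \<in> sets borel"
  shows "(\<lambda>ts. indicator A (ts i) :: real) \<in> borel_measurable (Pt k)"
proof -
  have "(\<lambda>ts. ts i) \<in> measurable (Pt k) (restrict_space lborel {0..})"
    unfolding Pt_def using assms(1) by (intro measurable_component_singleton) simp
  moreover have "(indicator A :: real \<Rightarrow> real) \<in> borel_measurable (restrict_space lborel {0..})"
    using assms(2) by (intro measurable_restrict_space1) simp
  ultimately show ?thesis by (rule measurable_compose)
qed

lemma Pt_box:
  assumes "A \<subseteq> {0..}" "A \<in> sets borel"
  shows "emeasure (Pt m) (PiE {..<m} (\<lambda>_. A)) = emeasure lborel A ^ m"
proof -
  interpret product_sigma_finite "\<lambda>_::nat. restrict_space lborel {0::real..}" by (rule Pt_psf)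
  have "emeasure (Pt m) (PiE {..<m} (\<lambda>_. A)) = (\<Prod>i<m. emeasure (restrict_space lborel {0..}) A)"
    unfolding Pt_def using assms by (subst emeasure_PiM) (auto simp: sets_restrict_space_iff)
  also have "\<dots> = (\<Prod>i<m. emeasure lborel A)"
    using assms by (subst emeasure_restrict_space) auto
  finally show ?thesis by simp
qed

lemma box_sets: "A \<in> sets borel \<Longrightarrow> A \<subseteq> {0..} \<Longrightarrow> PiE {..<m} (\<lambda>_. A) \<in> sets (Pt m)"
  unfolding Pt_def by (intro sets_PiM_I_finite) (auto simp: sets_restrict_space_iff)

lemma w1_int:
  assumes "1 \<le> k" "k \<le> n"
  shows "(\<integral>\<^sup>+ts. ennreal (indicator (Iv n k) (ts 0)) \<partial>Pt 1) = ennreal (1 / real n)"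
proof -
  have sub: "Iv n k \<subseteq> {0..}" using Iv_sub[OF assms] by auto
  have "(\<integral>\<^sup>+ts. ennreal (indicator (Iv n k) (ts 0)) \<partial>Pt 1) = (\<integral>\<^sup>+ts. indicator (PiE {..<1} (\<lambda>_. Iv n k)) ts \<partial>Pt 1)"
    by (intro nn_integral_cong) (auto simp: space_Pt PiE_iff indicator_def)
  also have "\<dots> = emeasure lborel (Iv n k) ^ 1"
    using sub by (simp add: box_sets Pt_box)
  finally show ?thesis using emeasure_Iv[of n k] assms by simp
qed

lemma w2_int:
  assumes "1 \<le> k" "k \<le> n"
  shows "(\<integral>\<^sup>+ts. ennreal (indicator (Iv n k) (ts 0) * indicator (Iv n k) (ts 1)) \<partial>Pt 2) = ennreal (1 / (real n)\<^sup>2)"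
proof -
  have sub: "Iv n k \<subseteq> {0..}" using Iv_sub[OF assms] by auto
  have "(\<integral>\<^sup>+ts. ennreal (indicator (Iv n k) (ts 0) * indicator (Iv n k) (ts 1)) \<partial>Pt 2)
      = (\<integral>\<^sup>+ts. indicator (PiE {..<2} (\<lambda>_. Iv n k)) ts \<partial>Pt 2)"
  proof (intro nn_integral_cong)
    fix ts assume "ts \<in> space (Pt 2)"
    then have ext: "ts \<in> extensional {..<2}" unfolding space_Pt by (simp add: PiE_iff)
    have "ts \<in> PiE {..<2} (\<lambda>_. Iv n k) \<longleftrightarrow> ts 0 \<in> Iv n k \<and> ts 1 \<in> Iv n k"
      using ext by (auto simp: PiE_iff less_2_cases_iff)
    then show "ennreal (indicator (Iv n k) (ts 0) * indicator (Iv n k) (ts 1)) = indicator (PiE {..<2} (\<lambda>_. Iv n k)) ts"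
      by (auto simp: indicator_def)
  qed
  also have "\<dots> = emeasure lborel (Iv n k) ^ 2"
    using sub by (simp add: box_sets Pt_box)
  finally show ?thesis using emeasure_Iv[of n k] assms by (simp add: power2_eq_square ennreal_mult[symmetric])
qed

lemma abs_powr_nat: "1 \<le> N \<Longrightarrow> \<bar>x\<bar> powr (real N) = \<bar>x\<bar> ^ N" for x :: real
  by (cases "x = 0") (auto simp: powr_realpow power_0_left)

lemma D1_meas:
  assumes Gm: "(\<lambda>(ts, \<omega>). G ts \<omega>) \<in> borel_measurable (Pt 1 \<Otimes>\<^sub>M M)"
  shows "D1 n k G \<in> borel_measurable M"
proof -
  have Gs[measurable]: "(\<lambda>x. G (snd x) (fst x)) \<in> borel_measurable (M \<Otimes>\<^sub>M Pt 1)"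
    using measurable_pair_swap[OF Gm] by (simp add: split_beta')
  have i0: "(\<lambda>x. indicator (Iv n k) (snd x 0) :: real) \<in> borel_measurable (M \<Otimes>\<^sub>M Pt 1)"
    by (rule measurable_compose[OF measurable_snd ind_comp_meas]) auto
  have "(\<lambda>x. indicator (Iv n k) (snd x 0) * G (snd x) (fst x)) \<in> borel_measurable (M \<Otimes>\<^sub>M Pt 1)"
    by (intro borel_measurable_times i0 Gs)
  then have "(\<lambda>(\<omega>, ts). indicator (Iv n k) (ts 0) * G ts \<omega>) \<in> borel_measurable (M \<Otimes>\<^sub>M Pt 1)"
    by (simp add: split_beta')
  from sigma_finite_measure.borel_measurable_lebesgue_integral[OF Pt_sf this]
  show ?thesis unfolding D1_def[abs_def] by simp
qed

lemma D11_meas: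
  assumes Gm: "(\<lambda>(ts, \<omega>). G ts \<omega>) \<in> borel_measurable (Pt 2 \<Otimes>\<^sub>M M)"
  shows "D11 n k G \<in> borel_measurable M"
proof -
  have Gs[measurable]: "(\<lambda>x. G (snd x) (fst x)) \<in> borel_measurable (M \<Otimes>\<^sub>M Pt 2)"
    using measurable_pair_swap[OF Gm] by (simp add: split_beta')
  have i0: "(\<lambda>x. indicator (Iv n k) (snd x 0) :: real) \<in> borel_measurable (M \<Otimes>\<^sub>M Pt 2)"
    by (rule measurable_compose[OF measurable_snd ind_comp_meas]) auto
  have i1: "(\<lambda>x. indicator (Iv n k) (snd x 1) :: real) \<in> borel_measurable (M \<Otimes>\<^sub>M Pt 2)"
    by (rule measurable_compose[OF measurable_snd ind_comp_meas]) auto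
  have "(\<lambda>x. indicator (Iv n k) (snd x 0) * indicator (Iv n k) (snd x 1) * G (snd x) (fst x)) \<in> borel_measurable (M \<Otimes>\<^sub>M Pt 2)"
    by (intro borel_measurable_times i0 i1 Gs)
  then have "(\<lambda>(\<omega>, ts). indicator (Iv n k) (ts 0) * indicator (Iv n k) (ts 1) * G ts \<omega>) \<in> borel_measurable (M \<Otimes>\<^sub>M Pt 2)"
    by (simp add: split_beta')
  from sigma_finite_measure.borel_measurable_lebesgue_integral[OF Pt_sf this]
  show ?thesis unfolding D11_def[abs_def] by simp
qed

lemma D1_moment:
  assumes PM: "prob_space M" and k: "1 \<le> k" "k \<le> n" and N: "1 \<le> N"
    and Gm: "(\<lambda>(ts, \<omega>). G ts \<omega>) \<in> borel_measurable (Pt 1 \<Otimes>\<^sub>M M)"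
    and bnd: "\<forall>ts\<in>cube 1. pmoment M (real N) (G ts) \<le> ennreal C" and C: "0 \<le> C"
  shows "(\<integral>\<^sup>+\<omega>. ennreal (\<bar>real n * D1 n k G \<omega>\<bar> ^ N) \<partial>M) \<le> ennreal C"
proof -
  have n: "1 \<le> n" using k by simp
  have "real n * D1 n k G \<omega> = (1 / (1 / real n)) * (\<integral>ts. indicator (Iv n k) (ts 0) * G ts \<omega> \<partial>Pt 1)" for \<omega>
    unfolding D1_def by simp
  moreover have "(\<integral>\<^sup>+\<omega>. ennreal (\<bar>(1/(1/real n)) * (\<integral>ts. indicator (Iv n k) (ts 0) * G ts \<omega> \<partial>Pt 1)\<bar> ^ N) \<partial>M) \<le> ennreal C"
  proof (rule D_moment[OF Pt_sf PM _ _ w1_int[OF k] _ N Gm _ C])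
    show "\<And>y. indicator (Iv n k) (y 0) = (0::real) \<or> indicator (Iv n k) (y 0) = (1::real)" by (simp add: indicator_def)
    show "(\<lambda>y. indicator (Iv n k) (y 0) :: real) \<in> borel_measurable (Pt 1)" by (rule ind_comp_meas) auto
    show "0 < 1 / real n" using n by simp
    fix ts assume ts: "ts \<in> space (Pt 1)" "indicator (Iv n k) (ts 0) \<noteq> (0::real)"
    then have "ts \<in> cube 1" using Iv_sub[OF k] by (auto simp: space_Pt cube_def PiE_iff indicator_def)
    then show "(\<integral>\<^sup>+\<omega>. ennreal (\<bar>G ts \<omega>\<bar> ^ N) \<partial>M) \<le> ennreal C"
      using bnd N unfolding pmoment_def by (simp add: abs_powr_nat)
  qed
  ultimately show ?thesis using n unfolding D1_def by simp
qed

lemma D11_moment: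
  assumes PM: "prob_space M" and k: "1 \<le> k" "k \<le> n" and N: "1 \<le> N"
    and Gm: "(\<lambda>(ts, \<omega>). G ts \<omega>) \<in> borel_measurable (Pt 2 \<Otimes>\<^sub>M M)"
    and bnd: "\<forall>ts\<in>cube 2. pmoment M (real N) (G ts) \<le> ennreal C" and C: "0 \<le> C"
  shows "(\<integral>\<^sup>+\<omega>. ennreal (\<bar>(real n)\<^sup>2 * D11 n k G \<omega>\<bar> ^ N) \<partial>M) \<le> ennreal C"
proof -
  have n: "1 \<le> n" using k by simp
  have "(real n)\<^sup>2 * D11 n k G \<omega> = (1 / (1 / (real n)\<^sup>2)) * (\<integral>ts. indicator (Iv n k) (ts 0) * indicator (Iv n k) (ts 1) * G ts \<omega> \<partial>Pt 2)" for \<omega>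
    unfolding D11_def by simp
  moreover have "(\<integral>\<^sup>+\<omega>. ennreal (\<bar>(1 / (1 / (real n)\<^sup>2)) * (\<integral>ts. indicator (Iv n k) (ts 0) * indicator (Iv n k) (ts 1) * G ts \<omega> \<partial>Pt 2)\<bar> ^ N) \<partial>M) \<le> ennreal C"
  proof (rule D_moment[OF Pt_sf PM _ _ w2_int[OF k] _ N Gm _ C])
    show "\<And>y. indicator (Iv n k) (y 0) * indicator (Iv n k) (y 1) = (0::real) \<or> indicator (Iv n k) (y 0) * indicator (Iv n k) (y 1) = (1::real)"
      by (simp add: indicator_def)
    show "(\<lambda>y. indicator (Iv n k) (y 0) * indicator (Iv n k) (y 1) :: real) \<in> borel_measurable (Pt 2)"
      by (intro borel_measurable_times ind_comp_meas) auto
    show "0 < 1 / (real n)\<^sup>2" using n by simp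
    fix ts assume ts: "ts \<in> space (Pt 2)" "indicator (Iv n k) (ts 0) * indicator (Iv n k) (ts 1) \<noteq> (0::real)"
    then have "ts \<in> cube 2" using Iv_sub[OF k]
      by (auto simp: space_Pt cube_def PiE_iff indicator_def less_2_cases_iff split: if_splits)
    then show "(\<integral>\<^sup>+\<omega>. ennreal (\<bar>G ts \<omega>\<bar> ^ N) \<partial>M) \<le> ennreal C"
      using bnd N unfolding pmoment_def by (simp add: abs_powr_nat)
  qed
  ultimately show ?thesis using n unfolding D11_def by simp
qed

definition nu1 :: "real measure" where "nu1 = density lborel (indicator {0..1})"

lemma sets_nu1[measurable_cong]: "sets nu1 = sets borel" unfolding nu1_def by simp
lemma space_nu1: "space nu1 = UNIV" unfolding nu1_def by simp

lemma nu1_prob: "prob_space nu1"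
proof (rule prob_spaceI)
  show "emeasure nu1 (space nu1) = 1" unfolding nu1_def
    by (simp add: emeasure_density nn_integral_indicator)
qed

lemma ind_nu1[measurable]: "A \<in> sets borel \<Longrightarrow> (indicator A :: real \<Rightarrow> real) \<in> borel_measurable nu1"
  by (simp add: measurable_cong_sets[OF sets_nu1 refl])

lemma conv1:
  assumes "h \<in> borel_measurable lborel"
  shows "(\<integral>\<^sup>+s\<in>{0..1}. h s \<partial>lborel) = (\<integral>\<^sup>+s. h s \<partial>nu1)"
  unfolding nu1_def using assms by (subst nn_integral_density) (auto simp: mult.commute)

lemma sum_ind_one:
  assumes n: "1 \<le> n" and x: "0 \<le> x" "x \<le> 1" and nf: "\<forall>j\<le>n. x \<noteq> real j / real n"
  shows "(\<Sum>j=1..n. indicator (Iv n j) x) = (1::real)"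
proof -
  define y where "y = real n * x"
  have npos: "real n > 0" using n by simp
  have ny: "y \<noteq> of_int i" for i :: int
  proof
    assume yi: "y = of_int i"
    have "0 \<le> y" unfolding y_def using x by simp
    then have "0 \<le> i" using yi by simp
    have "y \<le> real n * 1" unfolding y_def using x npos by (intro mult_left_mono) auto
    then have "of_int i \<le> real n" using yi by simp
    then have "nat i \<le> n" using \<open>0 \<le> i\<close> by linarith
    moreover have "x = real (nat i) / real n" using yi npos \<open>0 \<le> i\<close> unfolding y_def by (simp add: field_simps)
    ultimately show False using nf by blast
  qed
  have iff: "x \<in> Iv n j \<longleftrightarrow> \<lceil>y\<rceil> = int j" for j
  proof -
    have "x \<in> Iv n j \<longleftrightarrow> real j - 1 \<le> y \<and> y \<le> real j"
      unfolding Iv_def y_def using npos by (simp add: field_simps)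
    also have "real j - 1 \<le> y \<longleftrightarrow> real j - 1 < y" using ny[of "int j - 1"] by auto
    also have "(real j - 1 < y \<and> y \<le> real j) \<longleftrightarrow> \<lceil>y\<rceil> = int j" by (simp add: ceiling_eq_iff)
    finally show ?thesis .
  qed
  have x0: "x \<noteq> 0" using nf[rule_format, of 0] by simp
  then have "y > 0" using x npos unfolding y_def by simp
  then have c1: "1 \<le> \<lceil>y\<rceil>" by (simp add: one_le_ceiling)
  have "y \<le> real n * 1" unfolding y_def using x npos by (intro mult_left_mono) auto
  then have "y \<le> real n" by simp
  then have c2: "\<lceil>y\<rceil> \<le> int n" by (simp add: ceiling_le)
  have "(\<Sum>j=1..n. indicator (Iv n j) x) = (\<Sum>j\<in>{1..n}. if j = nat \<lceil>y\<rceil> then 1 else (0::real))"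
    using c1 by (intro sum.cong refl) (auto simp: indicator_def iff)
  also have "\<dots> = 1"
  proof -
    have "1 \<le> nat \<lceil>y\<rceil>" using c1 by (metis nat_mono nat_one_as_int)
    then show ?thesis using \<open>y \<le> real n\<close> by (simp add: sum.delta')
  qed
  finally show ?thesis .
qed

lemma part1:
  assumes n: "1 \<le> n"
  shows "AE s in nu1. (\<Sum>j=1..n. indicator (Iv n j) s) = (1::real)"
proof -
  define F where "F = (\<lambda>j. real j / real n) ` {..n}"
  have "F \<in> null_sets lborel" unfolding F_def by (intro finite_imp_null_set_lborel) simp
  then have "AE s in lborel. s \<notin> F" by (rule AE_not_in)
  then have "AE s in lborel. 0 < (indicator {0..1} s :: ennreal) \<longrightarrow> (\<Sum>j=1..n. indicator (Iv n j) s) = (1::real)"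
  proof eventually_elim
    case (elim s)
    show ?case
    proof
      assume "0 < (indicator {0..1} s :: ennreal)"
      then have "0 \<le> s \<and> s \<le> 1" by (cases "0 \<le> s \<and> s \<le> 1") (auto simp: indicator_def)
      then have "0 \<le> s" "s \<le> 1" by auto
      moreover have "\<forall>j\<le>n. s \<noteq> real j / real n" using elim unfolding F_def by auto
      ultimately show "(\<Sum>j=1..n. indicator (Iv n j) s) = (1::real)" using sum_ind_one[OF n] by blast
    qed
  qed
  then show ?thesis unfolding nu1_def by (subst AE_density) auto
qed

definition nu2 :: "(real \<times> real) measure" where "nu2 = nu1 \<Otimes>\<^sub>M nu1"

lemma nu2_prob: "prob_space nu2" unfolding nu2_def by (intro prob_space_pair nu1_prob)

lemma sets_nu2: "sets nu2 = sets (lborel \<Otimes>\<^sub>M lborel)"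
  unfolding nu2_def by (intro sets_pair_measure_cong) (simp_all add: sets_nu1)

lemma conv2:
  assumes h: "h \<in> borel_measurable (lborel \<Otimes>\<^sub>M lborel)"
  shows "(\<integral>\<^sup>+t\<in>{0..1}. (\<integral>\<^sup>+s\<in>{0..1}. h (t, s) \<partial>lborel) \<partial>lborel) = (\<integral>\<^sup>+x. h x \<partial>nu2)"
proof -
  interpret N1: prob_space nu1 by (rule nu1_prob)
  interpret PS: pair_sigma_finite nu1 nu1
    unfolding pair_sigma_finite_def using prob_space_imp_sigma_finite[OF nu1_prob] by simp
  have h2: "h \<in> borel_measurable (nu1 \<Otimes>\<^sub>M nu1)"
    using h by (simp add: measurable_cong_sets[OF sets_nu2[unfolded nu2_def] refl])
  have h3: "h \<in> borel_measurable (lborel \<Otimes>\<^sub>M nu1)"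
    using h by (simp add: measurable_cong_sets[OF sets_pair_measure_cong[OF refl sets_nu1[unfolded sets_lborel[symmetric]]] refl])
  have "(\<integral>\<^sup>+t\<in>{0..1}. (\<integral>\<^sup>+s\<in>{0..1}. h (t, s) \<partial>lborel) \<partial>lborel)
      = (\<integral>\<^sup>+t\<in>{0..1}. (\<integral>\<^sup>+s. h (t, s) \<partial>nu1) \<partial>lborel)"
    using measurable_Pair2[OF h] by (intro nn_integral_cong) (simp add: conv1)
  also have "\<dots> = (\<integral>\<^sup>+t. (\<integral>\<^sup>+s. h (t, s) \<partial>nu1) \<partial>nu1)"
    by (intro conv1 N1.borel_measurable_nn_integral_fst h3)
  also have "\<dots> = (\<integral>\<^sup>+x. h x \<partial>nu2)" unfolding nu2_def by (rule N1.nn_integral_fst[OF h2])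
  finally show ?thesis .
qed

lemma part2:
  assumes n: "1 \<le> n"
  shows "AE x in nu2. (\<Sum>g\<in>{1..n}\<times>{1..n}. indicator (Iv n (snd g)) (fst x) * indicator (Iv n (fst g)) (snd x)) = (1::real)"
proof -
  interpret PS: pair_sigma_finite nu1 nu1
    unfolding pair_sigma_finite_def using prob_space_imp_sigma_finite[OF nu1_prob] by simp
  have eq: "(\<Sum>g\<in>{1..n}\<times>{1..n}. indicator (Iv n (snd g)) (fst x) * indicator (Iv n (fst g)) (snd x))
      = (\<Sum>j=1..n. indicator (Iv n j) (snd x)) * (\<Sum>k=1..n. indicator (Iv n k) (fst x) :: real)" for x
  proof -
    have "(\<Sum>j=1..n. indicator (Iv n j) (snd x)) * (\<Sum>k=1..n. indicator (Iv n k) (fst x) :: real)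
        = (\<Sum>j\<in>{1..n}. \<Sum>k\<in>{1..n}. indicator (Iv n j) (snd x) * indicator (Iv n k) (fst x))"
      by (rule sum_product)
    also have "\<dots> = (\<Sum>(j,k)\<in>{1..n}\<times>{1..n}. indicator (Iv n j) (snd x) * indicator (Iv n k) (fst x))"
      by (rule sum.cartesian_product)
    also have "\<dots> = (\<Sum>g\<in>{1..n}\<times>{1..n}. indicator (Iv n (snd g)) (fst x) * indicator (Iv n (fst g)) (snd x))"
      by (intro sum.cong refl) (auto simp only: split_beta' mult.commute)
    finally show ?thesis by simp
  qed
  have "AE x in nu1. AE y in nu1. (\<Sum>j=1..n. indicator (Iv n j) y) * (\<Sum>k=1..n. indicator (Iv n k) x) = (1::real)"
    using part1[OF n]
  proof eventually_elim
    case (elim x)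
    note ex = elim
    show ?case by (rule eventually_mono[OF part1[OF n]]) (simp only: ex mult_1_right)
  qed
  then have "AE x in nu1 \<Otimes>\<^sub>M nu1. (\<Sum>j=1..n. indicator (Iv n j) (snd x)) * (\<Sum>k=1..n. indicator (Iv n k) (fst x)) = (1::real)"
  proof (intro PS.AE_pair_measure)
    have Fm: "(\<lambda>x. (\<Sum>j=1..n. indicator (Iv n j) (snd x)) * (\<Sum>k=1..n. indicator (Iv n k) (fst x)) :: real) \<in> borel_measurable (nu1 \<Otimes>\<^sub>M nu1)"
      by (intro borel_measurable_times borel_measurable_sum measurable_compose[OF measurable_snd ind_nu1]
          measurable_compose[OF measurable_fst ind_nu1] Iv_borel)
    have "(\<lambda>x. (\<Sum>j=1..n. indicator (Iv n j) (snd x)) * (\<Sum>k=1..n. indicator (Iv n k) (fst x)) :: real) -` {1} \<inter> space (nu1 \<Otimes>\<^sub>M nu1) \<in> sets (nu1 \<Otimes>\<^sub>M nu1)"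
      by (rule measurable_sets[OF Fm]) simp
    then show "{x \<in> space (nu1 \<Otimes>\<^sub>M nu1). (\<Sum>j=1..n. indicator (Iv n j) (snd x)) * (\<Sum>k=1..n. indicator (Iv n k) (fst x)) = (1::real)} \<in> sets (nu1 \<Otimes>\<^sub>M nu1)"
      by (simp add: vimage_def Int_def conj_commute)
  qed (simp add: split_beta')
  then show ?thesis unfolding nu2_def eq .
qed

lemma conv_prob_enn_cong:
  assumes "\<And>n \<omega>. \<omega> \<in> space M \<Longrightarrow> Y n \<omega> = Y' n \<omega>"
  shows "conv_prob_enn M Y = conv_prob_enn M Y'"
proof -
  have "{\<omega>\<in>space M. ennreal e < Y n \<omega>} = {\<omega>\<in>space M. ennreal e < Y' n \<omega>}" for e n
    using assms by auto
  then show ?thesis unfolding conv_prob_enn_def by simp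
qed

lemma grid1:
  fixes M :: "'a measure" and c :: "nat \<Rightarrow> nat \<Rightarrow> 'a \<Rightarrow> real" and f :: "real \<Rightarrow> 'a \<Rightarrow> real"
  assumes PM: "prob_space M"
    and cm: "\<And>n j. j \<in> {1..n} \<Longrightarrow> c n j \<in> borel_measurable M"
    and fm: "(\<lambda>(t, \<omega>). f t \<omega>) \<in> borel_measurable (lborel \<Otimes>\<^sub>M M)"
  shows "grid M nu1 (\<lambda>n. {1..n}) (\<lambda>n j s. indicator (Iv n j) s) c f"
proof (rule grid.intro)
  show "prob_space M" by (rule PM)
  show "prob_space nu1" by (rule nu1_prob)
  show "finite {1..n}" for n :: nat by simp
  show "(\<lambda>s. indicator (Iv n g) s :: real) \<in> borel_measurable nu1" for n g by simp
  show "indicator (Iv n g) x = (0::real) \<or> indicator (Iv n g) x = (1::real)" for n g x by (simp add: indicator_def)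
  show "1 \<le> n \<Longrightarrow> AE x in nu1. (\<Sum>g\<in>{1..n}. indicator (Iv n g) x) = (1::real)" for n by (rule part1)
  show "g \<in> {1..n} \<Longrightarrow> c n g \<in> borel_measurable M" for n g by (rule cm)
  have "(\<lambda>(x, y). f y x) \<in> borel_measurable (M \<Otimes>\<^sub>M lborel)"
    using measurable_pair_swap[OF fm] by simp
  then show "(\<lambda>p. f (snd p) (fst p)) \<in> borel_measurable (M \<Otimes>\<^sub>M nu1)"
    by (simp add: split_beta' measurable_cong_sets[OF sets_pair_measure_cong[OF refl sets_nu1[unfolded sets_lborel[symmetric]]] refl])
qed

lemma grid2:
  fixes M :: "'a measure" and c :: "nat \<Rightarrow> nat \<Rightarrow> nat \<Rightarrow> 'a \<Rightarrow> real" and f :: "real \<Rightarrow> real \<Rightarrow> 'a \<Rightarrow> real"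
  assumes PM: "prob_space M"
    and cm: "\<And>n j k. j \<in> {1..n} \<Longrightarrow> k \<in> {1..n} \<Longrightarrow> c n j k \<in> borel_measurable M"
    and fm: "(\<lambda>((t, s), \<omega>). f t s \<omega>) \<in> borel_measurable ((lborel \<Otimes>\<^sub>M lborel) \<Otimes>\<^sub>M M)"
  shows "grid M nu2 (\<lambda>n. {1..n} \<times> {1..n}) (\<lambda>n g x. indicator (Iv n (snd g)) (fst x) * indicator (Iv n (fst g)) (snd x))
           (\<lambda>n g. c n (fst g) (snd g)) (\<lambda>x. f (fst x) (snd x))"
proof (rule grid.intro)
  show "prob_space M" by (rule PM)
  show "prob_space nu2" by (rule nu2_prob)
  show "finite ({1..n} \<times> {1..n})" for n :: nat by simp
  show "(\<lambda>x. indicator (Iv n (snd g)) (fst x) * indicator (Iv n (fst g)) (snd x) :: real) \<in> borel_measurable nu2" for n g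
    unfolding nu2_def
    by (intro borel_measurable_times measurable_compose[OF measurable_snd ind_nu1]
          measurable_compose[OF measurable_fst ind_nu1] Iv_borel)
  show "indicator (Iv n (snd g)) (fst x) * indicator (Iv n (fst g)) (snd x) = (0::real) \<or>
        indicator (Iv n (snd g)) (fst x) * indicator (Iv n (fst g)) (snd x) = (1::real)" for n g x
    by (simp add: indicator_def)
  show "1 \<le> n \<Longrightarrow> AE x in nu2. (\<Sum>g\<in>{1..n} \<times> {1..n}. indicator (Iv n (snd g)) (fst x) * indicator (Iv n (fst g)) (snd x)) = (1::real)" for n
    by (rule part2)
  show "g \<in> {1..n} \<times> {1..n} \<Longrightarrow> c n (fst g) (snd g) \<in> borel_measurable M" for n g using cm by auto
  have "(\<lambda>(x, y). (\<lambda>((t, s), \<omega>). f t s \<omega>) (y, x)) \<in> borel_measurable (M \<Otimes>\<^sub>M (lborel \<Otimes>\<^sub>M lborel))"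
    by (rule measurable_pair_swap[OF fm])
  then show "(\<lambda>p. f (fst (snd p)) (snd (snd p)) (fst p)) \<in> borel_measurable (M \<Otimes>\<^sub>M nu2)"
    by (simp add: split_beta' measurable_cong_sets[OF sets_pair_measure_cong[OF refl sets_nu2] refl])
qed

lemma sum_pair: "(\<Sum>g\<in>A\<times>B. F (fst g) (snd g)) = (\<Sum>j\<in>A. \<Sum>k\<in>B. F j k)"
  by (simp add: sum.cartesian_product split_beta')

context
  fixes M :: "'a measure" and c :: "nat \<Rightarrow> nat \<Rightarrow> 'a \<Rightarrow> real" and f :: "real \<Rightarrow> 'a \<Rightarrow> real"
  assumes PM: "prob_space M"
    and cm: "\<And>n j. j \<in> {1..n} \<Longrightarrow> c n j \<in> borel_measurable M"
    and fm: "(\<lambda>(t, \<omega>). f t \<omega>) \<in> borel_measurable (lborel \<Otimes>\<^sub>M M)"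
begin

interpretation g: grid M nu1 "\<lambda>n. {1..n}" "\<lambda>n j s. indicator (Iv n j) s" c f
  by (rule grid1[OF PM cm fm])

lemma fsec1: "\<omega> \<in> space M \<Longrightarrow> (\<lambda>s. f s \<omega>) \<in> borel_measurable lborel"
  using measurable_Pair1[of "\<lambda>x. f (fst x) (snd x)", OF fm[unfolded split_beta']] by simp

lemma WA_eq1:
  "g.WA \<epsilon> n = (\<integral>\<^sup>+\<omega>. (\<integral>\<^sup>+s\<in>{0..1}. of_bool (\<epsilon> < \<bar>(\<Sum>j=1..n. indicator (Iv n j) s * c n j \<omega>) - f s \<omega>\<bar>) \<partial>lborel) \<partial>M)"
  unfolding g.WA_def g.V_def g.Z_def
proof (intro nn_integral_cong)
  fix \<omega> assume w: "\<omega> \<in> space M"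
  note fsec1[OF w, measurable]
  show "(\<integral>\<^sup>+s. of_bool (\<epsilon> < \<bar>(\<Sum>j=1..n. indicator (Iv n j) s * c n j \<omega>) - f s \<omega>\<bar>) \<partial>nu1)
     = (\<integral>\<^sup>+s\<in>{0..1}. of_bool (\<epsilon> < \<bar>(\<Sum>j=1..n. indicator (Iv n j) s * c n j \<omega>) - f s \<omega>\<bar>) \<partial>lborel)"
    by (rule conv1[symmetric]) measurable
qed

lemma WA'_eq1:
  assumes w: "\<omega> \<in> space M"
  shows "g.WA' r n \<omega> = (\<Sum>j=1..n. \<integral>\<^sup>+s\<in>{0..1}. ennreal (indicator (Iv n j) s * \<bar>c n j \<omega> - f s \<omega>\<bar> powr r) \<partial>lborel)"
  unfolding g.WA'_def
proof (intro sum.cong refl)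
  fix j
  note fsec1[OF w, measurable]
  show "(\<integral>\<^sup>+s. ennreal (indicator (Iv n j) s * \<bar>c n j \<omega> - f s \<omega>\<bar> powr r) \<partial>nu1)
     = (\<integral>\<^sup>+s\<in>{0..1}. ennreal (indicator (Iv n j) s * \<bar>c n j \<omega> - f s \<omega>\<bar> powr r) \<partial>lborel)"
    by (rule conv1[symmetric]) measurable
qed

lemma bridge1_AA':
  assumes A: "\<And>\<epsilon>. \<epsilon> > 0 \<Longrightarrow> (\<lambda>n. \<integral>\<^sup>+\<omega>. (\<integral>\<^sup>+s\<in>{0..1}. of_bool (\<epsilon> < \<bar>(\<Sum>j=1..n. indicator (Iv n j) s * c n j \<omega>) - f s \<omega>\<bar>) \<partial>lborel) \<partial>M) \<longlonglongrightarrow> 0"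
    and mom: "\<And>p::nat. p \<ge> 2 \<Longrightarrow> \<exists>C. \<forall>n j. j \<in> {1..n} \<longrightarrow> (\<integral>\<^sup>+\<omega>. ennreal (\<bar>c n j \<omega>\<bar> ^ p) \<partial>M) \<le> ennreal C"
    and r: "r > 0"
  shows "conv_prob_enn M (\<lambda>n \<omega>. \<Sum>j=1..n. \<integral>\<^sup>+s\<in>{0..1}. ennreal (indicator (Iv n j) s * \<bar>c n j \<omega> - f s \<omega>\<bar> powr r) \<partial>lborel)"
proof -
  have "conv_prob_enn M (g.WA' r)"
  proof (rule g.A_imp_A'[OF _ mom r])
    fix \<epsilon> :: real assume e: "\<epsilon> > 0"
    have "(\<lambda>n. g.WA \<epsilon> n) = (\<lambda>n. \<integral>\<^sup>+\<omega>. (\<integral>\<^sup>+s\<in>{0..1}. of_bool (\<epsilon> < \<bar>(\<Sum>j=1..n. indicator (Iv n j) s * c n j \<omega>) - f s \<omega>\<bar>) \<partial>lborel) \<partial>M)"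
      by (simp only: WA_eq1)
    then show "(\<lambda>n. g.WA \<epsilon> n) \<longlonglongrightarrow> 0" using A[OF e] by simp
  qed
  then show ?thesis by (subst (asm) conv_prob_enn_cong[OF WA'_eq1]) auto
qed

lemma bridge1_A'A:
  assumes r: "r > 0"
    and conv: "conv_prob_enn M (\<lambda>n \<omega>. \<Sum>j=1..n. \<integral>\<^sup>+s\<in>{0..1}. ennreal (indicator (Iv n j) s * \<bar>c n j \<omega> - f s \<omega>\<bar> powr r) \<partial>lborel)"
    and e: "\<epsilon> > 0"
  shows "(\<lambda>n. \<integral>\<^sup>+\<omega>. (\<integral>\<^sup>+s\<in>{0..1}. of_bool (\<epsilon> < \<bar>(\<Sum>j=1..n. indicator (Iv n j) s * c n j \<omega>) - f s \<omega>\<bar>) \<partial>lborel) \<partial>M) \<longlonglongrightarrow> 0"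
proof -
  have "conv_prob_enn M (g.WA' r)" using conv by (subst conv_prob_enn_cong[OF WA'_eq1]) auto
  from g.A'_imp_A[OF r this e] show ?thesis by (simp only: WA_eq1)
qed

end

context
  fixes M :: "'a measure" and c :: "nat \<Rightarrow> nat \<Rightarrow> nat \<Rightarrow> 'a \<Rightarrow> real" and f :: "real \<Rightarrow> real \<Rightarrow> 'a \<Rightarrow> real"
  assumes PM: "prob_space M"
    and cm: "\<And>n j k. j \<in> {1..n} \<Longrightarrow> k \<in> {1..n} \<Longrightarrow> c n j k \<in> borel_measurable M"
    and fm: "(\<lambda>((t, s), \<omega>). f t s \<omega>) \<in> borel_measurable ((lborel \<Otimes>\<^sub>M lborel) \<Otimes>\<^sub>M M)"
begin

interpretation g: grid M nu2 "\<lambda>n. {1..n} \<times> {1..n}" "\<lambda>n g x. indicator (Iv n (snd g)) (fst x) * indicator (Iv n (fst g)) (snd x)"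
  "\<lambda>n g. c n (fst g) (snd g)" "\<lambda>x. f (fst x) (snd x)"
  by (rule grid2[OF PM cm fm])

lemma fsec2: "\<omega> \<in> space M \<Longrightarrow> (\<lambda>x. f (fst x) (snd x) \<omega>) \<in> borel_measurable (lborel \<Otimes>\<^sub>M lborel)"
  using measurable_Pair1[of "\<lambda>y. f (fst (fst y)) (snd (fst y)) (snd y)", OF fm[unfolded split_beta']] by simp

lemma WA_eq2:
  "g.WA \<epsilon> n = (\<integral>\<^sup>+\<omega>. (\<integral>\<^sup>+t\<in>{0..1}. (\<integral>\<^sup>+s\<in>{0..1}. of_bool (\<epsilon> <
      \<bar>(\<Sum>j=1..n. \<Sum>k=1..n. indicator (Iv n k) t * indicator (Iv n j) s * c n j k \<omega>) - f t s \<omega>\<bar>) \<partial>lborel) \<partial>lborel) \<partial>M)"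
  unfolding g.WA_def g.V_def g.Z_def
proof (intro nn_integral_cong)
  fix \<omega> assume w: "\<omega> \<in> space M"
  note fsec2[OF w, measurable]
  have "(\<lambda>x. of_bool (\<epsilon> < \<bar>(\<Sum>g\<in>{1..n} \<times> {1..n}. indicator (Iv n (snd g)) (fst x) * indicator (Iv n (fst g)) (snd x) * c n (fst g) (snd g) \<omega>) - f (fst x) (snd x) \<omega>\<bar>) :: ennreal)
     \<in> borel_measurable (lborel \<Otimes>\<^sub>M lborel)" by measurable
  note cv = conv2[OF this]
  have eqs: "(\<Sum>g\<in>{1..n} \<times> {1..n}. indicator (Iv n (snd g)) t * indicator (Iv n (fst g)) s * c n (fst g) (snd g) \<omega>)
     = (\<Sum>j=1..n. \<Sum>k=1..n. indicator (Iv n k) t * indicator (Iv n j) s * c n j k \<omega>)" for t s :: real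
    using sum_pair[of "\<lambda>j k. indicator (Iv n k) t * indicator (Iv n j) s * c n j k \<omega>" "{1..n}" "{1..n}"] by simp
  show "(\<integral>\<^sup>+x. of_bool (\<epsilon> < \<bar>(\<Sum>g\<in>{1..n} \<times> {1..n}. indicator (Iv n (snd g)) (fst x) * indicator (Iv n (fst g)) (snd x) * c n (fst g) (snd g) \<omega>) - f (fst x) (snd x) \<omega>\<bar>) \<partial>nu2)
     = (\<integral>\<^sup>+t\<in>{0..1}. (\<integral>\<^sup>+s\<in>{0..1}. of_bool (\<epsilon> <
      \<bar>(\<Sum>j=1..n. \<Sum>k=1..n. indicator (Iv n k) t * indicator (Iv n j) s * c n j k \<omega>) - f t s \<omega>\<bar>) \<partial>lborel) \<partial>lborel)"
    using cv by (simp only: eqs fst_conv snd_conv)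
qed

lemma WA'_eq2:
  assumes w: "\<omega> \<in> space M"
  shows "g.WA' r n \<omega> = (\<Sum>j=1..n. \<Sum>k=1..n. \<integral>\<^sup>+t\<in>{0..1}. \<integral>\<^sup>+s\<in>{0..1}.
            ennreal (indicator (Iv n k) t * indicator (Iv n j) s * \<bar>c n j k \<omega> - f t s \<omega>\<bar> powr r) \<partial>lborel \<partial>lborel)"
  unfolding g.WA'_def sum_pair[where F="\<lambda>j k. \<integral>\<^sup>+x. ennreal (indicator (Iv n k) (fst x) * indicator (Iv n j) (snd x) * \<bar>c n j k \<omega> - f (fst x) (snd x) \<omega>\<bar> powr r) \<partial>nu2"]
proof (intro sum.cong refl)
  fix j k
  note fsec2[OF w, measurable]
  have "(\<lambda>x. ennreal (indicator (Iv n k) (fst x) * indicator (Iv n j) (snd x) * \<bar>c n j k \<omega> - f (fst x) (snd x) \<omega>\<bar> powr r))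
     \<in> borel_measurable (lborel \<Otimes>\<^sub>M lborel)" by measurable
  from conv2[OF this]
  show "(\<integral>\<^sup>+x. ennreal (indicator (Iv n k) (fst x) * indicator (Iv n j) (snd x) * \<bar>c n j k \<omega> - f (fst x) (snd x) \<omega>\<bar> powr r) \<partial>nu2)
     = (\<integral>\<^sup>+t\<in>{0..1}. \<integral>\<^sup>+s\<in>{0..1}. ennreal (indicator (Iv n k) t * indicator (Iv n j) s * \<bar>c n j k \<omega> - f t s \<omega>\<bar> powr r) \<partial>lborel \<partial>lborel)"
    by simp
qed

lemma bridge2_AA':
  assumes A: "\<And>\<epsilon>. \<epsilon> > 0 \<Longrightarrow> (\<lambda>n. \<integral>\<^sup>+\<omega>. (\<integral>\<^sup>+t\<in>{0..1}. (\<integral>\<^sup>+s\<in>{0..1}. of_bool (\<epsilon> <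
      \<bar>(\<Sum>j=1..n. \<Sum>k=1..n. indicator (Iv n k) t * indicator (Iv n j) s * c n j k \<omega>) - f t s \<omega>\<bar>) \<partial>lborel) \<partial>lborel) \<partial>M) \<longlonglongrightarrow> 0"
    and mom: "\<And>p::nat. p \<ge> 2 \<Longrightarrow> \<exists>C. \<forall>n j k. j \<in> {1..n} \<longrightarrow> k \<in> {1..n} \<longrightarrow> (\<integral>\<^sup>+\<omega>. ennreal (\<bar>c n j k \<omega>\<bar> ^ p) \<partial>M) \<le> ennreal C"
    and r: "r > 0"
  shows "conv_prob_enn M (\<lambda>n \<omega>. \<Sum>j=1..n. \<Sum>k=1..n. \<integral>\<^sup>+t\<in>{0..1}. \<integral>\<^sup>+s\<in>{0..1}.
            ennreal (indicator (Iv n k) t * indicator (Iv n j) s * \<bar>c n j k \<omega> - f t s \<omega>\<bar> powr r) \<partial>lborel \<partial>lborel)"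
proof -
  have "conv_prob_enn M (g.WA' r)"
  proof (rule g.A_imp_A'[OF _ _ r])
    fix \<epsilon> :: real assume e: "\<epsilon> > 0"
    have "(\<lambda>n. g.WA \<epsilon> n) = (\<lambda>n. \<integral>\<^sup>+\<omega>. (\<integral>\<^sup>+t\<in>{0..1}. (\<integral>\<^sup>+s\<in>{0..1}. of_bool (\<epsilon> <
      \<bar>(\<Sum>j=1..n. \<Sum>k=1..n. indicator (Iv n k) t * indicator (Iv n j) s * c n j k \<omega>) - f t s \<omega>\<bar>) \<partial>lborel) \<partial>lborel) \<partial>M)"
      by (simp only: WA_eq2)
    then show "(\<lambda>n. g.WA \<epsilon> n) \<longlonglongrightarrow> 0" using A[OF e] by simp
  next
    fix p :: nat assume "p \<ge> 2"
    from mom[OF this] obtain C where C: "\<forall>n j k. j \<in> {1..n} \<longrightarrow> k \<in> {1..n} \<longrightarrow> (\<integral>\<^sup>+\<omega>. ennreal (\<bar>c n j k \<omega>\<bar> ^ p) \<partial>M) \<le> ennreal C"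
      by blast
    then show "\<exists>C. \<forall>n g. g \<in> {1..n} \<times> {1..n} \<longrightarrow> (\<integral>\<^sup>+\<omega>. ennreal (\<bar>c n (fst g) (snd g) \<omega>\<bar> ^ p) \<partial>M) \<le> ennreal C"
      by (intro exI[of _ C]) auto
  qed
  then show ?thesis by (subst (asm) conv_prob_enn_cong[OF WA'_eq2]) auto
qed

lemma bridge2_A'A:
  assumes r: "r > 0"
    and conv: "conv_prob_enn M (\<lambda>n \<omega>. \<Sum>j=1..n. \<Sum>k=1..n. \<integral>\<^sup>+t\<in>{0..1}. \<integral>\<^sup>+s\<in>{0..1}.
            ennreal (indicator (Iv n k) t * indicator (Iv n j) s * \<bar>c n j k \<omega> - f t s \<omega>\<bar> powr r) \<partial>lborel \<partial>lborel)"
    and e: "\<epsilon> > 0"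
  shows "(\<lambda>n. \<integral>\<^sup>+\<omega>. (\<integral>\<^sup>+t\<in>{0..1}. (\<integral>\<^sup>+s\<in>{0..1}. of_bool (\<epsilon> <
      \<bar>(\<Sum>j=1..n. \<Sum>k=1..n. indicator (Iv n k) t * indicator (Iv n j) s * c n j k \<omega>) - f t s \<omega>\<bar>) \<partial>lborel) \<partial>lborel) \<partial>M) \<longlonglongrightarrow> 0"
proof -
  have "conv_prob_enn M (g.WA' r)" using conv by (subst conv_prob_enn_cong[OF WA'_eq2]) auto
  from g.A'_imp_A[OF r this e] show ?thesis by (simp only: WA_eq2)
qed

end

lemma mom0:
  fixes a :: "nat \<Rightarrow> nat \<Rightarrow> 'a \<Rightarrow> real" and D :: "nat \<Rightarrow> nat \<Rightarrow> (nat \<Rightarrow> real) \<Rightarrow> 'a \<Rightarrow> real"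
  assumes PM: "prob_space M" and iso: "isonormal M W"
    and md: "\<And>n j. j \<in> {1..n} \<Longrightarrow> malliavin_density M W (a n j) 0 (D n j)"
    and am: "\<And>n j. j \<in> {1..n} \<Longrightarrow> a n j \<in> borel_measurable M"
    and bnd: "\<And>p. p > 1 \<Longrightarrow> \<exists>C. \<forall>n j. j \<in> {1..n} \<longrightarrow> (\<forall>ts\<in>cube 0. pmoment M p (D n j ts) \<le> ennreal C)"
    and p: "p \<ge> 2"
  shows "\<exists>C. \<forall>n j. j \<in> {1..n} \<longrightarrow> (\<integral>\<^sup>+\<omega>. ennreal (\<bar>a n j \<omega>\<bar> ^ p) \<partial>M) \<le> ennreal C"
proof -
  obtain C where C: "\<forall>n j. j \<in> {1..n} \<longrightarrow> (\<forall>ts\<in>cube 0. pmoment M (real p) (D n j ts) \<le> ennreal C)"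
    using bnd[of "real p"] p by auto
  have x0: "(\<lambda>_. undefined) \<in> cube 0" unfolding cube_def by simp
  show ?thesis
  proof (intro exI allI impI)
    fix n j :: nat assume j: "j \<in> {1..n}"
    have "AE \<omega> in M. a n j \<omega> = D n j (\<lambda>_. undefined) \<omega>" by (rule version0[OF PM iso md[OF j] am[OF j]])
    then have "(\<integral>\<^sup>+\<omega>. ennreal (\<bar>a n j \<omega>\<bar> ^ p) \<partial>M) = pmoment M (real p) (D n j (\<lambda>_. undefined))"
      unfolding pmoment_def using p by (intro nn_integral_cong_AE) (auto elim!: eventually_mono simp: abs_powr_nat)
    also have "\<dots> \<le> ennreal C" using C j x0 by blast
    finally show "(\<integral>\<^sup>+\<omega>. ennreal (\<bar>a n j \<omega>\<bar> ^ p) \<partial>M) \<le> ennreal C" .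
  qed
qed

lemma momD1:
  fixes G :: "nat \<Rightarrow> nat \<Rightarrow> (nat \<Rightarrow> real) \<Rightarrow> 'a \<Rightarrow> real"
  assumes PM: "prob_space M"
    and Gm: "\<And>n j. j \<in> {1..n} \<Longrightarrow> (\<lambda>(ts, \<omega>). G n j ts \<omega>) \<in> borel_measurable (Pt 1 \<Otimes>\<^sub>M M)"
    and bnd: "\<And>p. p > 1 \<Longrightarrow> \<exists>C. \<forall>n j. j \<in> {1..n} \<longrightarrow> (\<forall>ts\<in>cube 1. pmoment M p (G n j ts) \<le> ennreal C)"
    and p: "p \<ge> 2"
  shows "\<exists>C. \<forall>n j k. j \<in> {1..n} \<longrightarrow> k \<in> {1..n} \<longrightarrow> (\<integral>\<^sup>+\<omega>. ennreal (\<bar>real n * D1 n k (G n j) \<omega>\<bar> ^ p) \<partial>M) \<le> ennreal C"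
proof -
  obtain C0 where C0: "\<forall>n j. j \<in> {1..n} \<longrightarrow> (\<forall>ts\<in>cube 1. pmoment M (real p) (G n j ts) \<le> ennreal C0)"
    using bnd[of "real p"] p by auto
  define C where "C = max C0 0"
  have C: "\<forall>ts\<in>cube 1. pmoment M (real p) (G n j ts) \<le> ennreal C" if "j \<in> {1..n}" for n j
    using C0 that order_trans[OF _ ennreal_leI[of C0 C]] unfolding C_def by force
  show ?thesis
  proof (intro exI allI impI)
    fix n j k :: nat assume j: "j \<in> {1..n}" and k: "k \<in> {1..n}"
    show "(\<integral>\<^sup>+\<omega>. ennreal (\<bar>real n * D1 n k (G n j) \<omega>\<bar> ^ p) \<partial>M) \<le> ennreal C"
      using k p by (intro D1_moment[OF PM _ _ _ Gm[OF j] C[OF j]]) (auto simp: C_def)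
  qed
qed

lemma momD11:
  fixes G :: "nat \<Rightarrow> nat \<Rightarrow> (nat \<Rightarrow> real) \<Rightarrow> 'a \<Rightarrow> real"
  assumes PM: "prob_space M"
    and Gm: "\<And>n j. j \<in> {1..n} \<Longrightarrow> (\<lambda>(ts, \<omega>). G n j ts \<omega>) \<in> borel_measurable (Pt 2 \<Otimes>\<^sub>M M)"
    and bnd: "\<And>p. p > 1 \<Longrightarrow> \<exists>C. \<forall>n j. j \<in> {1..n} \<longrightarrow> (\<forall>ts\<in>cube 2. pmoment M p (G n j ts) \<le> ennreal C)"
    and p: "p \<ge> 2"
  shows "\<exists>C. \<forall>n j k. j \<in> {1..n} \<longrightarrow> k \<in> {1..n} \<longrightarrow> (\<integral>\<^sup>+\<omega>. ennreal (\<bar>(real n)\<^sup>2 * D11 n k (G n j) \<omega>\<bar> ^ p) \<partial>M) \<le> ennreal C"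
proof -
  obtain C0 where C0: "\<forall>n j. j \<in> {1..n} \<longrightarrow> (\<forall>ts\<in>cube 2. pmoment M (real p) (G n j ts) \<le> ennreal C0)"
    using bnd[of "real p"] p by auto
  define C where "C = max C0 0"
  have C: "\<forall>ts\<in>cube 2. pmoment M (real p) (G n j ts) \<le> ennreal C" if "j \<in> {1..n}" for n j
    using C0 that order_trans[OF _ ennreal_leI[of C0 C]] unfolding C_def by force
  show ?thesis
  proof (intro exI allI impI)
    fix n j k :: nat assume j: "j \<in> {1..n}" and k: "k \<in> {1..n}"
    show "(\<integral>\<^sup>+\<omega>. ennreal (\<bar>(real n)\<^sup>2 * D11 n k (G n j) \<omega>\<bar> ^ p) \<partial>M) \<le> ennreal C"
      using k p by (intro D11_moment[OF PM _ _ _ Gm[OF j] C[OF j]]) (auto simp: C_def)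
  qed
qed

lemma const_int: "(\<integral>\<^sup>+(s::real)\<in>{0..1}. X \<partial>lborel) = X"
  by (simp add: nn_integral_cmult_indicator)

theorem lemma8p1:
  fixes M :: "'a measure"
    and W :: "(real \<Rightarrow> real) \<Rightarrow> 'a \<Rightarrow> real"
    and Q :: "nat set"
    and a :: "nat \<Rightarrow> nat \<Rightarrow> nat \<Rightarrow> 'a \<Rightarrow> real"
    and Da :: "nat \<Rightarrow> nat \<Rightarrow> nat \<Rightarrow> nat \<Rightarrow> (nat \<Rightarrow> real) \<Rightarrow> 'a \<Rightarrow> real"
    and Ginf :: "'a \<Rightarrow> real" and DG :: "nat \<Rightarrow> (nat \<Rightarrow> real) \<Rightarrow> 'a \<Rightarrow> real"
    and X :: "'a \<Rightarrow> real" and DX :: "nat \<Rightarrow> (nat \<Rightarrow> real) \<Rightarrow> 'a \<Rightarrow> real"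
    and af :: "real \<Rightarrow> nat \<Rightarrow> 'a \<Rightarrow> real"
    and ar arr :: "real \<Rightarrow> real \<Rightarrow> nat \<Rightarrow> 'a \<Rightarrow> real"
    and ad add :: "real \<Rightarrow> 'a \<Rightarrow> real"
  assumes "prob_space M"
    and "isonormal M W"
    and "finite Q" and "Q \<subseteq> {2..}"
    and "\<And>q. q \<in> Q \<Longrightarrow> (\<lambda>(t, \<omega>). af t q \<omega>) \<in> borel_measurable (lborel \<Otimes>\<^sub>M M)"
    and "\<And>q. q \<in> Q \<Longrightarrow> (\<lambda>((t, s), \<omega>). ar t s q \<omega>) \<in> borel_measurable ((lborel \<Otimes>\<^sub>M lborel) \<Otimes>\<^sub>M M)"
    and "\<And>q. q \<in> Q \<Longrightarrow> (\<lambda>((t, s), \<omega>). arr t s q \<omega>) \<in> borel_measurable ((lborel \<Otimes>\<^sub>M lborel) \<Otimes>\<^sub>M M)"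
    and "2 \<in> Q \<Longrightarrow> (\<lambda>(t, \<omega>). ad t \<omega>) \<in> borel_measurable (lborel \<Otimes>\<^sub>M M)"
    and "2 \<in> Q \<Longrightarrow> (\<lambda>(t, \<omega>). add t \<omega>) \<in> borel_measurable (lborel \<Otimes>\<^sub>M M)"
    and "\<And>\<omega>. \<omega> \<in> space M \<Longrightarrow>
           Ginf \<omega> = (\<Sum>q\<in>Q. fact q * (\<integral>t\<in>{0..1}. (af t q \<omega>)\<^sup>2 \<partial>lborel))"
    and "\<And>n j q i. j \<in> {1..n} \<Longrightarrow> q \<in> Q \<Longrightarrow> malliavin_density M W (a n j q) i (Da n j q i)"
    and "\<And>i. malliavin_density M W Ginf i (DG i)"
    and "\<And>i. malliavin_density M W X i (DX i)"
  shows "(cond_A M W Q a Da Ginf DG X DX af ar arr ad add \<longleftrightarrow>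
            (\<exists>r>0. cond_A' r M W Q a Da Ginf DG X DX af ar arr ad add)) \<and>
         (cond_A M W Q a Da Ginf DG X DX af ar arr ad add \<longleftrightarrow>
            (\<forall>r>0. cond_A' r M W Q a Da Ginf DG X DX af ar arr ad add))"
proof -
  note PM = assms(1) and iso = assms(2)
  have md: "\<And>n j q i. j \<in> {1..n} \<Longrightarrow> q \<in> Q \<Longrightarrow> malliavin_density M W (a n j q) i (Da n j q i)"
    by (rule assms(11))
  have Dam: "\<And>n j q i. j \<in> {1..n} \<Longrightarrow> q \<in> Q \<Longrightarrow> (\<lambda>(ts, \<omega>). Da n j q i ts \<omega>) \<in> borel_measurable (Pt i \<Otimes>\<^sub>M M)"
    using md unfolding malliavin_density_def by blast
  have cmD1: "(\<lambda>\<omega>. real n * D1 n k (Da n j q 1) \<omega>) \<in> borel_measurable M" if "j \<in> {1..n}" "q \<in> Q" for n j k q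
    using D1_meas[OF Dam[OF that]] by measurable
  have cmD11: "(\<lambda>\<omega>. (real n)\<^sup>2 * D11 n k (Da n j q 2) \<omega>) \<in> borel_measurable M" if "j \<in> {1..n}" "q \<in> Q" for n j k q
    using D11_meas[OF Dam[OF that]] by measurable
  have Q2: "2 \<in> Q \<Longrightarrow> (2::nat) \<in> Q" by simp
  have main1: "cond_A' r M W Q a Da Ginf DG X DX af ar arr ad add"
    if A: "cond_A M W Q a Da Ginf DG X DX af ar arr ad add" and r: "r > 0" for r
  proof -
    have C1: "cond_C1 M W Q a Da" and C2: "cond_C2 M W Q a Ginf DG" and C3: "cond_C3 M W X DX"
      using A unfolding cond_A_def by blast+
    note lims = A[unfolded cond_A_def, THEN conjunct2, THEN conjunct2, THEN conjunct2]
    have am: "\<And>n j q. j \<in> {1..n} \<Longrightarrow> q \<in> Q \<Longrightarrow> a n j q \<in> borel_measurable M"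
      using C1 unfolding cond_C1_def in_Dinf_def by blast
    have bnd: "\<And>i p q. q \<in> Q \<Longrightarrow> p > 1 \<Longrightarrow> \<exists>C. \<forall>n j. j \<in> {1..n} \<longrightarrow> (\<forall>ts\<in>cube i. pmoment M p (Da n j q i ts) \<le> ennreal C)"
      using C1 unfolding cond_C1_def by blast
    show ?thesis unfolding cond_A'_def
    proof (intro conjI C1 C2 C3 ballI impI)
      fix q assume q: "q \<in> Q"
      show "conv_prob_enn M (\<lambda>n \<omega>. \<Sum>j = 1..n. \<integral>\<^sup>+ s\<in>{0..1}. ennreal (indicator (Iv n j) s * \<bar>a n j q \<omega> - af s q \<omega>\<bar> powr r) \<partial>lborel)"
      proof (rule bridge1_AA'[where c="\<lambda>n j. a n j q" and f="\<lambda>s \<omega>. af s q \<omega>", OF PM _ _ _ _ r])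
        show "\<And>n j. j \<in> {1..n} \<Longrightarrow> a n j q \<in> borel_measurable M" using am q by blast
        show "(\<lambda>(t, \<omega>). af t q \<omega>) \<in> borel_measurable (lborel \<Otimes>\<^sub>M M)" by (rule assms(5)[OF q])
        show "\<And>\<epsilon>. \<epsilon> > 0 \<Longrightarrow> (\<lambda>n. \<integral>\<^sup>+\<omega>. (\<integral>\<^sup>+s\<in>{0..1}. of_bool (\<epsilon> < \<bar>(\<Sum>j=1..n. indicator (Iv n j) s * a n j q \<omega>) - af s q \<omega>\<bar>) \<partial>lborel) \<partial>M) \<longlonglongrightarrow> 0"
          using lims q by blast
        show "\<And>p::nat. p \<ge> 2 \<Longrightarrow> \<exists>C. \<forall>n j. j \<in> {1..n} \<longrightarrow> (\<integral>\<^sup>+\<omega>. ennreal (\<bar>a n j q \<omega>\<bar> ^ p) \<partial>M) \<le> ennreal C"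
          by (rule mom0[where a="\<lambda>n j. a n j q" and D="\<lambda>n j. Da n j q 0", OF PM iso md[OF _ q] am[OF _ q] bnd[OF q]])
      qed
      show "conv_prob_enn M (\<lambda>n \<omega>. \<Sum>j = 1..n. \<Sum>k = 1..n. \<integral>\<^sup>+ t\<in>{0..1}. \<integral>\<^sup>+ s\<in>{0..1}.
            ennreal (indicator (Iv n k) t * indicator (Iv n j) s * \<bar>real n * D1 n k (Da n j q 1) \<omega> - ar t s q \<omega>\<bar> powr r) \<partial>lborel \<partial>lborel)"
      proof (rule bridge2_AA'[where c="\<lambda>n j k \<omega>. real n * D1 n k (Da n j q 1) \<omega>" and f="\<lambda>t s \<omega>. ar t s q \<omega>", OF PM _ _ _ _ r])
        show "\<And>n j k. j \<in> {1..n} \<Longrightarrow> k \<in> {1..n} \<Longrightarrow> (\<lambda>\<omega>. real n * D1 n k (Da n j q 1) \<omega>) \<in> borel_measurable M"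
          using cmD1 q by blast
        show "(\<lambda>((t, s), \<omega>). ar t s q \<omega>) \<in> borel_measurable ((lborel \<Otimes>\<^sub>M lborel) \<Otimes>\<^sub>M M)" by (rule assms(6)[OF q])
        show "\<And>\<epsilon>. \<epsilon> > 0 \<Longrightarrow> (\<lambda>n. \<integral>\<^sup>+\<omega>. (\<integral>\<^sup>+t\<in>{0..1}. (\<integral>\<^sup>+s\<in>{0..1}. of_bool (\<epsilon> <
            \<bar>(\<Sum>j=1..n. \<Sum>k=1..n. indicator (Iv n k) t * indicator (Iv n j) s * (real n * D1 n k (Da n j q 1) \<omega>)) - ar t s q \<omega>\<bar>) \<partial>lborel) \<partial>lborel) \<partial>M) \<longlonglongrightarrow> 0"
          using lims q by blast
        show "\<And>p::nat. p \<ge> 2 \<Longrightarrow> \<exists>C. \<forall>n j k. j \<in> {1..n} \<longrightarrow> k \<in> {1..n} \<longrightarrow> (\<integral>\<^sup>+\<omega>. ennreal (\<bar>real n * D1 n k (Da n j q 1) \<omega>\<bar> ^ p) \<partial>M) \<le> ennreal C"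
          by (rule momD1[where G="\<lambda>n j. Da n j q 1", OF PM Dam[OF _ q] bnd[OF q]])
      qed
      show "conv_prob_enn M (\<lambda>n \<omega>. \<Sum>j = 1..n. \<Sum>k = 1..n. \<integral>\<^sup>+ t\<in>{0..1}. \<integral>\<^sup>+ s\<in>{0..1}.
            ennreal (indicator (Iv n k) t * indicator (Iv n j) s * \<bar>(real n)\<^sup>2 * D11 n k (Da n j q 2) \<omega> - arr t s q \<omega>\<bar> powr r) \<partial>lborel \<partial>lborel)"
      proof (rule bridge2_AA'[where c="\<lambda>n j k \<omega>. (real n)\<^sup>2 * D11 n k (Da n j q 2) \<omega>" and f="\<lambda>t s \<omega>. arr t s q \<omega>", OF PM _ _ _ _ r])
        show "\<And>n j k. j \<in> {1..n} \<Longrightarrow> k \<in> {1..n} \<Longrightarrow> (\<lambda>\<omega>. (real n)\<^sup>2 * D11 n k (Da n j q 2) \<omega>) \<in> borel_measurable M"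
          using cmD11 q by blast
        show "(\<lambda>((t, s), \<omega>). arr t s q \<omega>) \<in> borel_measurable ((lborel \<Otimes>\<^sub>M lborel) \<Otimes>\<^sub>M M)" by (rule assms(7)[OF q])
        show "\<And>\<epsilon>. \<epsilon> > 0 \<Longrightarrow> (\<lambda>n. \<integral>\<^sup>+\<omega>. (\<integral>\<^sup>+t\<in>{0..1}. (\<integral>\<^sup>+s\<in>{0..1}. of_bool (\<epsilon> <
            \<bar>(\<Sum>j=1..n. \<Sum>k=1..n. indicator (Iv n k) t * indicator (Iv n j) s * ((real n)\<^sup>2 * D11 n k (Da n j q 2) \<omega>)) - arr t s q \<omega>\<bar>) \<partial>lborel) \<partial>lborel) \<partial>M) \<longlonglongrightarrow> 0"
          using lims q by blast
        show "\<And>p::nat. p \<ge> 2 \<Longrightarrow> \<exists>C. \<forall>n j k. j \<in> {1..n} \<longrightarrow> k \<in> {1..n} \<longrightarrow> (\<integral>\<^sup>+\<omega>. ennreal (\<bar>(real n)\<^sup>2 * D11 n k (Da n j q 2) \<omega>\<bar> ^ p) \<partial>M) \<le> ennreal C"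
          by (rule momD11[where G="\<lambda>n j. Da n j q 2", OF PM Dam[OF _ q] bnd[OF q]])
      qed
      assume q2: "2 \<in> Q"
      show "conv_prob_enn M (\<lambda>n \<omega>. \<Sum>k = 1..n. \<integral>\<^sup>+ t\<in>{0..1}. ennreal (indicator (Iv n k) t * \<bar>real n * D1 n k (Da n k 2 1) \<omega> - ad t \<omega>\<bar> powr r) \<partial>lborel)"
      proof (rule bridge1_AA'[where c="\<lambda>n k \<omega>. real n * D1 n k (Da n k 2 1) \<omega>" and f="\<lambda>t \<omega>. ad t \<omega>", OF PM _ _ _ _ r])
        show "\<And>n k. k \<in> {1..n} \<Longrightarrow> (\<lambda>\<omega>. real n * D1 n k (Da n k 2 1) \<omega>) \<in> borel_measurable M"
          using cmD1 q2 by blast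
        show "(\<lambda>(t, \<omega>). ad t \<omega>) \<in> borel_measurable (lborel \<Otimes>\<^sub>M M)" by (rule assms(8)[OF q2])
        show "\<And>\<epsilon>. \<epsilon> > 0 \<Longrightarrow> (\<lambda>n. \<integral>\<^sup>+\<omega>. (\<integral>\<^sup>+s\<in>{0..1}. of_bool (\<epsilon> < \<bar>(\<Sum>j=1..n. indicator (Iv n j) s * (real n * D1 n j (Da n j 2 1) \<omega>)) - ad s \<omega>\<bar>) \<partial>lborel) \<partial>M) \<longlonglongrightarrow> 0"
          using lims q q2 by blast
        fix p :: nat assume p: "p \<ge> 2"
        obtain C where C: "\<forall>n j k. j \<in> {1..n} \<longrightarrow> k \<in> {1..n} \<longrightarrow> (\<integral>\<^sup>+\<omega>. ennreal (\<bar>real n * D1 n k (Da n j 2 1) \<omega>\<bar> ^ p) \<partial>M) \<le> ennreal C"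
          using momD1[where G="\<lambda>n j. Da n j 2 1", OF PM Dam[OF _ q2] bnd[OF q2] p] by blast
        then show "\<exists>C. \<forall>n k. k \<in> {1..n} \<longrightarrow> (\<integral>\<^sup>+\<omega>. ennreal (\<bar>real n * D1 n k (Da n k 2 1) \<omega>\<bar> ^ p) \<partial>M) \<le> ennreal C"
          by blast
      qed
      show "conv_prob_enn M (\<lambda>n \<omega>. \<Sum>j = 1..n. \<integral>\<^sup>+ t\<in>{0..1}. ennreal (indicator (Iv n j) t * \<bar>(real n)\<^sup>2 * D11 n j (Da n j 2 2) \<omega> - add t \<omega>\<bar> powr r) \<partial>lborel)"
      proof (rule bridge1_AA'[where c="\<lambda>n j \<omega>. (real n)\<^sup>2 * D11 n j (Da n j 2 2) \<omega>" and f="\<lambda>t \<omega>. add t \<omega>", OF PM _ _ _ _ r])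
        show "\<And>n j. j \<in> {1..n} \<Longrightarrow> (\<lambda>\<omega>. (real n)\<^sup>2 * D11 n j (Da n j 2 2) \<omega>) \<in> borel_measurable M"
          using cmD11 q2 by blast
        show "(\<lambda>(t, \<omega>). add t \<omega>) \<in> borel_measurable (lborel \<Otimes>\<^sub>M M)" by (rule assms(9)[OF q2])
        fix \<epsilon> :: real assume e: "\<epsilon> > 0"
        have "(\<lambda>n. \<integral>\<^sup>+\<omega>. (\<integral>\<^sup>+t\<in>{0..1}. (\<integral>\<^sup>+(s::real)\<in>{0..1}. of_bool (\<epsilon> <
            \<bar>(\<Sum>j=1..n. indicator (Iv n j) t * ((real n)\<^sup>2 * D11 n j (Da n j 2 2) \<omega>)) - add t \<omega>\<bar>)
               \<partial>lborel) \<partial>lborel) \<partial>M) \<longlonglongrightarrow> 0"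
          using lims q q2 e by blast
        then show "(\<lambda>n. \<integral>\<^sup>+\<omega>. (\<integral>\<^sup>+s\<in>{0..1}. of_bool (\<epsilon> < \<bar>(\<Sum>j=1..n. indicator (Iv n j) s * ((real n)\<^sup>2 * D11 n j (Da n j 2 2) \<omega>)) - add s \<omega>\<bar>) \<partial>lborel) \<partial>M) \<longlonglongrightarrow> 0"
          by (simp only: const_int)
      next
        fix p :: nat assume p: "p \<ge> 2"
        obtain C where C: "\<forall>n j k. j \<in> {1..n} \<longrightarrow> k \<in> {1..n} \<longrightarrow> (\<integral>\<^sup>+\<omega>. ennreal (\<bar>(real n)\<^sup>2 * D11 n k (Da n j 2 2) \<omega>\<bar> ^ p) \<partial>M) \<le> ennreal C"
          using momD11[where G="\<lambda>n j. Da n j 2 2", OF PM Dam[OF _ q2] bnd[OF q2] p] by blast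
        then show "\<exists>C. \<forall>n j. j \<in> {1..n} \<longrightarrow> (\<integral>\<^sup>+\<omega>. ennreal (\<bar>(real n)\<^sup>2 * D11 n j (Da n j 2 2) \<omega>\<bar> ^ p) \<partial>M) \<le> ennreal C"
          by blast
      qed
    qed
  qed
  have main2: "cond_A M W Q a Da Ginf DG X DX af ar arr ad add"
    if A': "cond_A' r M W Q a Da Ginf DG X DX af ar arr ad add" and r: "r > 0" for r
  proof -
    have C1: "cond_C1 M W Q a Da" and C2: "cond_C2 M W Q a Ginf DG" and C3: "cond_C3 M W X DX"
      using A' unfolding cond_A'_def by blast+
    note lims = A'[unfolded cond_A'_def, THEN conjunct2, THEN conjunct2, THEN conjunct2]
    have am: "\<And>n j q. j \<in> {1..n} \<Longrightarrow> q \<in> Q \<Longrightarrow> a n j q \<in> borel_measurable M"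
      using C1 unfolding cond_C1_def in_Dinf_def by blast
    show ?thesis unfolding cond_A_def
    proof (intro conjI C1 C2 C3 allI impI ballI)
      fix \<epsilon> :: real and q assume e: "\<epsilon> > 0" and q: "q \<in> Q"
      show "(\<lambda>n. \<integral>\<^sup>+\<omega>. (\<integral>\<^sup>+s\<in>{0..1}. of_bool (\<epsilon> < \<bar>(\<Sum>j=1..n. indicator (Iv n j) s * a n j q \<omega>) - af s q \<omega>\<bar>) \<partial>lborel) \<partial>M) \<longlonglongrightarrow> 0"
        by (rule bridge1_A'A[where c="\<lambda>n j. a n j q" and f="\<lambda>s \<omega>. af s q \<omega>", OF PM _ assms(5)[OF q] r _ e])
           (use am q lims in blast)+
      show "(\<lambda>n. \<integral>\<^sup>+\<omega>. (\<integral>\<^sup>+t\<in>{0..1}. (\<integral>\<^sup>+s\<in>{0..1}. of_bool (\<epsilon> <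
            \<bar>(\<Sum>j=1..n. \<Sum>k=1..n. indicator (Iv n k) t * indicator (Iv n j) s * (real n * D1 n k (Da n j q 1) \<omega>)) - ar t s q \<omega>\<bar>) \<partial>lborel) \<partial>lborel) \<partial>M) \<longlonglongrightarrow> 0"
        by (rule bridge2_A'A[where c="\<lambda>n j k \<omega>. real n * D1 n k (Da n j q 1) \<omega>" and f="\<lambda>t s \<omega>. ar t s q \<omega>", OF PM _ assms(6)[OF q] r _ e])
           (use cmD1 q lims in blast)+
      show "(\<lambda>n. \<integral>\<^sup>+\<omega>. (\<integral>\<^sup>+t\<in>{0..1}. (\<integral>\<^sup>+s\<in>{0..1}. of_bool (\<epsilon> <
            \<bar>(\<Sum>j=1..n. \<Sum>k=1..n. indicator (Iv n k) t * indicator (Iv n j) s * ((real n)\<^sup>2 * D11 n k (Da n j q 2) \<omega>)) - arr t s q \<omega>\<bar>) \<partial>lborel) \<partial>lborel) \<partial>M) \<longlonglongrightarrow> 0"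
        by (rule bridge2_A'A[where c="\<lambda>n j k \<omega>. (real n)\<^sup>2 * D11 n k (Da n j q 2) \<omega>" and f="\<lambda>t s \<omega>. arr t s q \<omega>", OF PM _ assms(7)[OF q] r _ e])
           (use cmD11 q lims in blast)+
      assume q2: "2 \<in> Q"
      show "(\<lambda>n. \<integral>\<^sup>+\<omega>. (\<integral>\<^sup>+t\<in>{0..1}. of_bool (\<epsilon> <
            \<bar>(\<Sum>k=1..n. indicator (Iv n k) t * (real n * D1 n k (Da n k 2 1) \<omega>)) - ad t \<omega>\<bar>) \<partial>lborel) \<partial>M) \<longlonglongrightarrow> 0"
        by (rule bridge1_A'A[where c="\<lambda>n k \<omega>. real n * D1 n k (Da n k 2 1) \<omega>" and f="\<lambda>t \<omega>. ad t \<omega>", OF PM _ assms(8)[OF q2] r _ e])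
           (use cmD1 q2 lims q in blast)+
      have "(\<lambda>n. \<integral>\<^sup>+\<omega>. (\<integral>\<^sup>+t\<in>{0..1}. of_bool (\<epsilon> <
            \<bar>(\<Sum>j=1..n. indicator (Iv n j) t * ((real n)\<^sup>2 * D11 n j (Da n j 2 2) \<omega>)) - add t \<omega>\<bar>) \<partial>lborel) \<partial>M) \<longlonglongrightarrow> 0"
        by (rule bridge1_A'A[where c="\<lambda>n j \<omega>. (real n)\<^sup>2 * D11 n j (Da n j 2 2) \<omega>" and f="\<lambda>t \<omega>. add t \<omega>", OF PM _ assms(9)[OF q2] r _ e])
           (use cmD11 q2 lims q in blast)+
      then show "(\<lambda>n. \<integral>\<^sup>+\<omega>. (\<integral>\<^sup>+t\<in>{0..1}. (\<integral>\<^sup>+(s::real)\<in>{0..1}. of_bool (\<epsilon> <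
            \<bar>(\<Sum>j=1..n. indicator (Iv n j) t * ((real n)\<^sup>2 * D11 n j (Da n j 2 2) \<omega>)) - add t \<omega>\<bar>)
               \<partial>lborel) \<partial>lborel) \<partial>M) \<longlonglongrightarrow> 0"
        by (simp only: const_int)
    qed
  qed
  show ?thesis
  proof (intro conjI iffI)
    assume "cond_A M W Q a Da Ginf DG X DX af ar arr ad add"
    then have "cond_A' 1 M W Q a Da Ginf DG X DX af ar arr ad add" by (rule main1) simp
    then show "\<exists>r>0. cond_A' r M W Q a Da Ginf DG X DX af ar arr ad add"
      by (intro exI[of _ "1::real"]) simp
  next
    assume "\<exists>r>0. cond_A' r M W Q a Da Ginf DG X DX af ar arr ad add"
    then show "cond_A M W Q a Da Ginf DG X DX af ar arr ad add" using main2 by blast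
  next
    assume "cond_A M W Q a Da Ginf DG X DX af ar arr ad add"
    then show "\<forall>r>0. cond_A' r M W Q a Da Ginf DG X DX af ar arr ad add"
      using main1 by blast
  next
    assume "\<forall>r>0. cond_A' r M W Q a Da Ginf DG X DX af ar arr ad add"
    then show "cond_A M W Q a Da Ginf DG X DX af ar arr ad add" using main2[of 1] by auto
  qed
qed

end
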